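(* Let $\mathcal{N}$ be an Extended TKPN (a Mimos model). Fix, for every input channel of $\mathcal{N}$, an input data stream together with the arrival times of its data items in the corresponding FIFO or register, i.e. a timed input stream. Then the output data streams computed by $\mathcal{N}$ are uniquely determined, and so are the time points at which the data items are inserted into the output FIFOs or registers. That is, $\mathcal{N}$ defines a function from tuples of timed input streams to tuples of timed output streams.
   Context: A Kahn Process Network (KPN) consists of nodes (processes) and FIFO channels of unbounded capacity. Each channel has at most one reader and at most one writer. Each node computes a tuple of functions, one per output, mapping input sequences to a unique output sequence, and a node cannot access the state of other nodes. Reading from a FIFO is blocking: a node waits until all data needed for its next step is available and cannot test a channel for emptiness. Writing is non-blocking. A TKPN (timed KPN) is a KPN in which every node is additionally given a deterministic release pattern (a non-decreasing, divergent sequence of time points in $\mathbb{R}$) and a deadline $\delta\ge 0$. At a release, if all needed inputs are available, the node reads its inputs, computes, and writes its outputs exactly $\delta$ time units after the release; the relevant release is the first one at or after the time when all required data is ready. An Extended TKPN (Mimos) additionally allows: (i) register channels: a write overwrites the stored value; a read is non-blocking and returns the most recently written value; if a read and a write occur at the same time, the write happens first. (ii) merge nodes: a node with at least two input FIFOs and one output FIFO. At each activation it reads all data available in its input FIFOs and outputs all data read from the first input, then all data read from the second, and so on; all output items are stamped with the activation time. A timed stream is a sequence of pairs (data value, time point) whose time components are non-decreasing and divergent. *)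

theory Defs
  imports Complex_Main "HOL-Library.Product_Lexorder"
begin

text \<open>A (finite or infinite) stream of stamped items, represented as a prefix-closed
  partial map from positions to items.\<close>
type_synonym ('v, 't) str = "nat \<Rightarrow> ('v \<times> 't) option"

definition tstream :: "('v, real) str \<Rightarrow> bool" where
  "tstream s \<longleftrightarrow>
     (\<forall>i. s i = None \<longrightarrow> s (Suc i) = None) \<and>
     (\<forall>i j v w t u. i \<le> j \<longrightarrow> s i = Some (v, t) \<longrightarrow> s j = Some (w, u) \<longrightarrow> t \<le> u) \<and>
     ((\<forall>i. s i \<noteq> None) \<longrightarrow> (\<forall>B. \<exists>i t v. s i = Some (v, t) \<and> B < t))"

text \<open>Internally, writes are stamped with superdense time (real time, microstep),
  ordered lexicographically (Product_Lexorder).  Zero-delay writes get the next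
  microstep, which makes the causal order within one time instant explicit.\<close>
type_synonym sdtime = "real \<times> nat"

definition strip :: "('v, sdtime) str \<Rightarrow> ('v, real) str" where
  "strip s = (\<lambda>i. map_option (\<lambda>(v, t, m). (v, t)) (s i))"

definition stamp0 :: "('v, real) str \<Rightarrow> ('v, sdtime) str" where
  "stamp0 s = (\<lambda>i. map_option (\<lambda>(v, t). (v, (t, 0))) (s i))"

text \<open>Concatenation of the (finite) output lists of successive firings, each list stamped
  with the write time of its firing.\<close>
definition cum :: "(nat \<Rightarrow> ('v list \<times> 't) option) \<Rightarrow> nat \<Rightarrow> nat" where
  "cum ev k = (\<Sum>i<k. case ev i of None \<Rightarrow> 0 | Some (xs, _) \<Rightarrow> length xs)"

definition concat_str :: "(nat \<Rightarrow> ('v list \<times> 't) option) \<Rightarrow> ('v, 't) str" where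
  "concat_str ev i =
     (if \<exists>k. i < cum ev (Suc k) then
        (let k = (LEAST k. i < cum ev (Suc k)) in
           case ev k of None \<Rightarrow> None | Some (xs, t) \<Rightarrow> Some (xs ! (i - cum ev k), t))
      else None)"

text \<open>A process node is a deterministic sequential (Kahn) process given as a state machine:
  initial state, the number of tokens it needs from each input FIFO for its next step
  (depending on its state), and the step function which receives the tokens read from the
  input FIFOs and the current values of the input registers (None = never written) and
  returns the next state, the list of values written to each output FIFO and the value
  (if any) written to each output register.
  A merge node is given by the ordered list of its input FIFOs.\<close>
datatype ('c, 's, 'v) nkind =
    Proc 's "'s \<Rightarrow> 'c \<Rightarrow> nat"
         "'s \<Rightarrow> ('c \<Rightarrow> 'v list) \<Rightarrow> ('c \<Rightarrow> 'v option) \<Rightarrow> 's \<times> ('c \<Rightarrow> 'v list) \<times> ('c \<Rightarrow> 'v option)"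
  | Merge "'c list"

record ('n, 'c, 's, 'v) mimos =
  nodes  :: "'n set"
  chans  :: "'c set"
  is_reg :: "'c \<Rightarrow> bool"
  writer :: "'c \<Rightarrow> 'n option"     \<comment> \<open>None: input channel of the network\<close>
  reader :: "'c \<Rightarrow> 'n option"     \<comment> \<open>None: output channel of the network\<close>
  kind   :: "'n \<Rightarrow> ('c, 's, 'v) nkind"
  rel    :: "'n \<Rightarrow> nat \<Rightarrow> real"  \<comment> \<open>release pattern (activation times for merges)\<close>
  dl     :: "'n \<Rightarrow> real"

definition infifos :: "('n, 'c, 's, 'v) mimos \<Rightarrow> 'n \<Rightarrow> 'c set" where
  "infifos N n = {c \<in> chans N. reader N c = Some n \<and> \<not> is_reg N c}"

definition inregs :: "('n, 'c, 's, 'v) mimos \<Rightarrow> 'n \<Rightarrow> 'c set" where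
  "inregs N n = {c \<in> chans N. reader N c = Some n \<and> is_reg N c}"

definition outchans :: "('n, 'c, 's, 'v) mimos \<Rightarrow> 'n \<Rightarrow> 'c set" where
  "outchans N n = {c \<in> chans N. writer N c = Some n}"

definition wf_mimos :: "('n, 'c, 's, 'v) mimos \<Rightarrow> bool" where
  "wf_mimos N \<longleftrightarrow>
     finite (nodes N) \<and> finite (chans N) \<and>
     (\<forall>c \<in> chans N. \<forall>n. writer N c = Some n \<longrightarrow> n \<in> nodes N) \<and>
     (\<forall>c \<in> chans N. \<forall>n. reader N c = Some n \<longrightarrow> n \<in> nodes N) \<and>
     (\<forall>n \<in> nodes N. mono (rel N n) \<and> (\<forall>B. \<exists>k. B < rel N n k) \<and> 0 \<le> dl N n) \<and>
     (\<forall>n \<in> nodes N. \<forall>cs. kind N n = Merge cs \<longrightarrow>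
        2 \<le> length cs \<and> distinct cs \<and> set cs = {c \<in> chans N. reader N c = Some n} \<and>
        (\<forall>c \<in> set cs. \<not> is_reg N c) \<and>
        (\<exists>c. outchans N n = {c} \<and> \<not> is_reg N c))"

text \<open>Histories: for every channel, the stream of all items written to it (for a register:
  the sequence of writes), with superdense write stamps.\<close>
type_synonym ('c, 'v) hist = "'c \<Rightarrow> ('v, sdtime) str"

definition stamp :: "('v, sdtime) str \<Rightarrow> nat \<Rightarrow> sdtime" where
  "stamp s i = snd (the (s i))"

definition val :: "('v, sdtime) str \<Rightarrow> nat \<Rightarrow> 'v" where
  "val s i = fst (the (s i))"

text \<open>Non-blocking register read at time \<open>\<tau>\<close>: most recent write not later than \<open>\<tau>\<close>
  (so a simultaneous write happens first).\<close>
definition reg_val :: "('v, sdtime) str \<Rightarrow> sdtime \<Rightarrow> 'v option" where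
  "reg_val s \<tau> =
     (if \<exists>i. s i \<noteq> None \<and> stamp s i \<le> \<tau>
      then Some (val s (GREATEST i. s i \<noteq> None \<and> stamp s i \<le> \<tau>)) else None)"

text \<open>Configuration of a process node before a firing: state, number of tokens consumed so far
  from each FIFO, index of the first release not yet used, time of the previous firing.\<close>
type_synonym ('c, 's) conf = "'s \<times> ('c \<Rightarrow> nat) \<times> nat \<times> sdtime"

definition p_ready :: "('n, 'c, 's, 'v) mimos \<Rightarrow> 'n \<Rightarrow> ('s \<Rightarrow> 'c \<Rightarrow> nat) \<Rightarrow> ('c, 'v) hist
                       \<Rightarrow> 's \<Rightarrow> ('c \<Rightarrow> nat) \<Rightarrow> bool" where
  "p_ready N n dem H st cns \<longleftrightarrow>
     (\<forall>c \<in> infifos N n. \<forall>i. cns c \<le> i \<and> i < cns c + dem st c \<longrightarrow> H c i \<noteq> None)"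

definition p_stamps :: "('n, 'c, 's, 'v) mimos \<Rightarrow> 'n \<Rightarrow> ('s \<Rightarrow> 'c \<Rightarrow> nat) \<Rightarrow> ('c, 'v) hist
                       \<Rightarrow> 's \<Rightarrow> ('c \<Rightarrow> nat) \<Rightarrow> sdtime set" where
  "p_stamps N n dem H st cns =
     {stamp (H c) i | c i. c \<in> infifos N n \<and> cns c \<le> i \<and> i < cns c + dem st c}"

text \<open>One firing from configuration (st, cns, nj, lt), assuming the needed data is present:
  it happens at the first unused release at or after the time when all needed data is ready.\<close>
definition p_step :: "('n, 'c, 's, 'v) mimos \<Rightarrow> 'n \<Rightarrow> ('s \<Rightarrow> 'c \<Rightarrow> nat)
      \<Rightarrow> ('s \<Rightarrow> ('c \<Rightarrow> 'v list) \<Rightarrow> ('c \<Rightarrow> 'v option) \<Rightarrow> 's \<times> ('c \<Rightarrow> 'v list) \<times> ('c \<Rightarrow> 'v option))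
      \<Rightarrow> ('c, 'v) hist \<Rightarrow> ('c, 's) conf
      \<Rightarrow> ('c, 's) conf \<times> (sdtime \<times> ('c \<Rightarrow> 'v list) \<times> ('c \<Rightarrow> 'v option))" where
  "p_step N n dem stp H cf =
     (case cf of (st, cns, nj, lt) \<Rightarrow>
       let S = p_stamps N n dem H st cns;
           j = (LEAST j. nj \<le> j \<and> (\<forall>x \<in> S. fst x \<le> rel N n j));
           \<tau> = Max ({(rel N n j, 0), lt} \<union> S);
           fr = (\<lambda>c. if c \<in> infifos N n then map (val (H c)) [cns c..<cns c + dem st c] else []);
           rr = (\<lambda>c. if c \<in> inregs N n then reg_val (H c) \<tau> else None);
           (st', fo, ro) = stp st fr rr;
           w = (if 0 < dl N n then (rel N n j + dl N n, 0) else (fst \<tau>, Suc (snd \<tau>)))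
       in ((st', (\<lambda>c. cns c + (if c \<in> infifos N n then dem st c else 0)), Suc j, \<tau>), (w, fo, ro)))"

primrec p_conf :: "('n, 'c, 's, 'v) mimos \<Rightarrow> 'n \<Rightarrow> 's \<Rightarrow> ('s \<Rightarrow> 'c \<Rightarrow> nat)
      \<Rightarrow> ('s \<Rightarrow> ('c \<Rightarrow> 'v list) \<Rightarrow> ('c \<Rightarrow> 'v option) \<Rightarrow> 's \<times> ('c \<Rightarrow> 'v list) \<times> ('c \<Rightarrow> 'v option))
      \<Rightarrow> ('c, 'v) hist \<Rightarrow> nat \<Rightarrow> ('c, 's) conf option" where
  "p_conf N n i0 dem stp H 0 = Some (i0, (\<lambda>_. 0), 0, (rel N n 0, 0))"
| "p_conf N n i0 dem stp H (Suc k) =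
     (case p_conf N n i0 dem stp H k of
        None \<Rightarrow> None
      | Some cf \<Rightarrow> (case cf of (st, cns, _) \<Rightarrow>
          if p_ready N n dem H st cns then Some (fst (p_step N n dem stp H cf)) else None))"

definition p_event :: "('n, 'c, 's, 'v) mimos \<Rightarrow> 'n \<Rightarrow> 's \<Rightarrow> ('s \<Rightarrow> 'c \<Rightarrow> nat)
      \<Rightarrow> ('s \<Rightarrow> ('c \<Rightarrow> 'v list) \<Rightarrow> ('c \<Rightarrow> 'v option) \<Rightarrow> 's \<times> ('c \<Rightarrow> 'v list) \<times> ('c \<Rightarrow> 'v option))
      \<Rightarrow> ('c, 'v) hist \<Rightarrow> nat \<Rightarrow> (sdtime \<times> ('c \<Rightarrow> 'v list) \<times> ('c \<Rightarrow> 'v option)) option" where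
  "p_event N n i0 dem stp H k =
     (case p_conf N n i0 dem stp H k of
        None \<Rightarrow> None
      | Some cf \<Rightarrow> (case cf of (st, cns, _) \<Rightarrow>
          if p_ready N n dem H st cns then Some (snd (p_step N n dem stp H cf)) else None))"

text \<open>Merge node: the k-th activation happens at release k; it reads all items of each input
  FIFO present at that time and not read before, and outputs them (first input first),
  stamped with the activation time.\<close>
definition cnt :: "('v, sdtime) str \<Rightarrow> sdtime \<Rightarrow> nat" where
  "cnt s \<tau> = card {i. s i \<noteq> None \<and> stamp s i \<le> \<tau>}"

definition merge_event :: "('n, 'c, 's, 'v) mimos \<Rightarrow> 'n \<Rightarrow> 'c list \<Rightarrow> ('c, 'v) hist
      \<Rightarrow> nat \<Rightarrow> ('v list \<times> sdtime) option" where
  "merge_event N n cs H k =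
     Some (concat (map (\<lambda>c. map (val (H c))
             [(if k = 0 then 0 else cnt (H c) (rel N n (k - 1), 0))..<cnt (H c) (rel N n k, 0)]) cs),
           (rel N n k, 1))"

definition node_out :: "('n, 'c, 's, 'v) mimos \<Rightarrow> 'n \<Rightarrow> ('c, 'v) hist \<Rightarrow> 'c \<Rightarrow> ('v, sdtime) str" where
  "node_out N n H c =
     (case kind N n of
        Proc i0 dem stp \<Rightarrow>
          concat_str (\<lambda>k. case p_event N n i0 dem stp H k of
                              None \<Rightarrow> None
                            | Some (w, fo, ro) \<Rightarrow>
                                Some (if is_reg N c then (case ro c of None \<Rightarrow> [] | Some v \<Rightarrow> [v])
                                      else fo c, w))
      | Merge cs \<Rightarrow> concat_str (merge_event N n cs H))"

definition is_run :: "('n, 'c, 's, 'v) mimos \<Rightarrow> ('c \<Rightarrow> ('v, real) str) \<Rightarrow> ('c, 'v) hist \<Rightarrow> bool" where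
  "is_run N inp H \<longleftrightarrow>
     (\<forall>c \<in> chans N. H c = (case writer N c of None \<Rightarrow> stamp0 (inp c) | Some n \<Rightarrow> node_out N n H c))"

definition in_chans :: "('n, 'c, 's, 'v) mimos \<Rightarrow> 'c set" where
  "in_chans N = {c \<in> chans N. writer N c = None}"

definition out_chans :: "('n, 'c, 's, 'v) mimos \<Rightarrow> 'c set" where
  "out_chans N = {c \<in> chans N. reader N c = None}"

end

theory Submission
  imports Defs "HOL-Library.Infinite_Set"
begin


definition nice :: "('v, sdtime) str \<Rightarrow> bool" where
  "nice s \<longleftrightarrow> (\<forall>i j. i \<le> j \<longrightarrow> s j \<noteq> None \<longrightarrow> s i \<noteq> None) \<and>
     (\<forall>i j v w t u. i \<le> j \<longrightarrow> s i = Some (v, t) \<longrightarrow> s j = Some (w, u) \<longrightarrow> t \<le> u)"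

definition agree_le :: "sdtime \<Rightarrow> ('v, sdtime) str \<Rightarrow> ('v, sdtime) str \<Rightarrow> bool" where
  "agree_le \<sigma> s s' \<longleftrightarrow> (\<forall>i v t. t \<le> \<sigma> \<longrightarrow> (s i = Some (v, t) \<longleftrightarrow> s' i = Some (v, t)))"

definition agree_lt :: "sdtime \<Rightarrow> ('v, sdtime) str \<Rightarrow> ('v, sdtime) str \<Rightarrow> bool" where
  "agree_lt \<sigma> s s' \<longleftrightarrow> (\<forall>i v t. t < \<sigma> \<longrightarrow> (s i = Some (v, t) \<longleftrightarrow> s' i = Some (v, t)))"

definition evmono :: "(nat \<Rightarrow> ('v list \<times> sdtime) option) \<Rightarrow> bool" where
  "evmono ev \<longleftrightarrow> (\<forall>k k' l w. k' \<le> k \<longrightarrow> ev k = Some (l, w) \<longrightarrow> (\<exists>l' w'. ev k' = Some (l', w') \<and> w' \<le> w))"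

lemma concat_str_SomeD:
  assumes "concat_str ev i = Some (v, t)"
  shows "\<exists>k l. ev k = Some (l, t) \<and> i < cum ev (Suc k) \<and> cum ev k \<le> i
     \<and> v = l ! (i - cum ev k) \<and> (\<forall>k'. i < cum ev (Suc k') \<longrightarrow> k \<le> k')"
proof -
  have ex: "\<exists>k. i < cum ev (Suc k)"
    using assms by (auto simp: concat_str_def split: if_splits)
  define k where "k = (LEAST k. i < cum ev (Suc k))"
  have k1: "i < cum ev (Suc k)" unfolding k_def using ex by (rule LeastI_ex)
  have k2: "\<forall>k'. i < cum ev (Suc k') \<longrightarrow> k \<le> k'" unfolding k_def by (auto intro: Least_le)
  have k3: "cum ev k \<le> i"
  proof (cases k)
    case 0 then show ?thesis by (simp add: cum_def)
  next
    case (Suc m)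
    then have "\<not> i < cum ev (Suc m)" using k2 by force
    then show ?thesis using Suc by simp
  qed
  have "concat_str ev i = (case ev k of None \<Rightarrow> None | Some (xs, t) \<Rightarrow> Some (xs ! (i - cum ev k), t))"
    using ex unfolding concat_str_def Let_def k_def[symmetric] by simp
  with assms k1 k2 k3 show ?thesis
    by (auto split: option.splits)
qed

lemma cum_Suc: "cum ev (Suc k) = cum ev k + (case ev k of None \<Rightarrow> 0 | Some (xs, _) \<Rightarrow> length xs)"
  by (simp add: cum_def)

lemma cum_mono: "k \<le> k' \<Longrightarrow> cum ev k \<le> cum ev k'"
  by (induction k' rule: dec_induct) (auto simp: cum_Suc)

lemma concat_str_block:
  assumes "ev k = Some (l, t)" "cum ev k \<le> i" "i < cum ev (Suc k)"
  shows "concat_str ev i = Some (l ! (i - cum ev k), t)"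
proof -
  have ex: "\<exists>k. i < cum ev (Suc k)" using assms by auto
  have "(LEAST k. i < cum ev (Suc k)) = k"
  proof (rule Least_equality)
    show "i < cum ev (Suc k)" by fact
  next
    fix y assume "i < cum ev (Suc y)"
    show "k \<le> y"
    proof (rule ccontr)
      assume "\<not> k \<le> y"
      then have "Suc y \<le> k" by simp
      then have "cum ev (Suc y) \<le> cum ev k" by (rule cum_mono)
      with \<open>i < cum ev (Suc y)\<close> assms(2) show False by simp
    qed
  qed
  then show ?thesis using ex assms(1) by (simp add: concat_str_def Let_def)
qed

lemma cum_agree: "(\<forall>k'<K. ev k' = ev' k') \<Longrightarrow> cum ev K = cum ev' K"
  by (simp add: cum_def)

lemma concat_str_agree:
  assumes "concat_str ev i = Some (v, t)"
    and "\<And>k' k l. ev k = Some (l, t) \<Longrightarrow> k' \<le> k \<Longrightarrow> ev' k' = ev k'"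
  shows "concat_str ev' i = Some (v, t)"
proof -
  obtain k l where k: "ev k = Some (l, t)" "i < cum ev (Suc k)" "cum ev k \<le> i" "v = l ! (i - cum ev k)"
    using concat_str_SomeD[OF assms(1)] by blast
  have ag: "\<forall>k'<Suc k. ev k' = ev' k'" using assms(2)[OF k(1)] by (metis less_Suc_eq_le)
  have c1: "cum ev' (Suc k) = cum ev (Suc k)" using cum_agree[OF ag] by simp
  have c2: "cum ev' k = cum ev k" using ag by (intro cum_agree[symmetric]) auto
  have "ev' k = Some (l, t)" using ag k(1) by auto
  then show ?thesis using concat_str_block[of ev' k l t i] k c1 c2 by simp
qed

lemma concat_agree_le:
  assumes "evmono ev" "evmono ev'"
    and "\<And>k l w. ev k = Some (l, w) \<Longrightarrow> w \<le> \<sigma> \<Longrightarrow> ev' k = ev k"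
    and "\<And>k l w. ev' k = Some (l, w) \<Longrightarrow> w \<le> \<sigma> \<Longrightarrow> ev k = ev' k"
  shows "agree_le \<sigma> (concat_str ev) (concat_str ev')"
  unfolding agree_le_def
proof (intro allI impI iffI)
  fix i v t assume t: "t \<le> \<sigma>"
  { assume "concat_str ev i = Some (v, t)"
    then show "concat_str ev' i = Some (v, t)"
    proof (rule concat_str_agree)
      fix k' k l assume "ev k = Some (l, t)" "k' \<le> k"
      then obtain l' w' where "ev k' = Some (l', w')" "w' \<le> t"
        using assms(1) unfolding evmono_def by blast
      then show "ev' k' = ev k'" using assms(3) t by auto
    qed }
  { assume "concat_str ev' i = Some (v, t)"
    then show "concat_str ev i = Some (v, t)"
    proof (rule concat_str_agree)
      fix k' k l assume "ev' k = Some (l, t)" "k' \<le> k"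
      then obtain l' w' where "ev' k' = Some (l', w')" "w' \<le> t"
        using assms(2) unfolding evmono_def by blast
      then show "ev k' = ev' k'" using assms(4) t by auto
    qed }
qed

lemma concat_nice:
  assumes "evmono ev"
  shows "nice (concat_str ev)"
  unfolding nice_def
proof (intro conjI allI impI)
  fix i j assume ij: "i \<le> j" and "concat_str ev j \<noteq> None"
  then obtain v t where "concat_str ev j = Some (v, t)" by auto
  from concat_str_SomeD[OF this] obtain k l where k: "ev k = Some (l, t)" "j < cum ev (Suc k)" by blast
  define k0 where "k0 = (LEAST k. i < cum ev (Suc k))"
  have ex: "\<exists>k. i < cum ev (Suc k)" using k ij by (intro exI[of _ k]) simp
  have "k0 \<le> k" unfolding k0_def using k ij by (intro Least_le) simp
  then obtain l' w' where "ev k0 = Some (l', w')" using assms k(1) unfolding evmono_def by blast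
  then show "concat_str ev i \<noteq> None" using ex by (simp add: concat_str_def k0_def[symmetric] Let_def)
next
  fix i j v w t u assume ij: "i \<le> j" and i: "concat_str ev i = Some (v, t)" and j: "concat_str ev j = Some (w, u)"
  from concat_str_SomeD[OF i] obtain ki li where ki: "ev ki = Some (li, t)" "\<forall>k'. i < cum ev (Suc k') \<longrightarrow> ki \<le> k'" by blast
  from concat_str_SomeD[OF j] obtain kj lj where kj: "ev kj = Some (lj, u)" "j < cum ev (Suc kj)" by blast
  have "ki \<le> kj" using ki(2) kj(2) ij by auto
  then obtain l' w' where "ev ki = Some (l', w')" "w' \<le> u" using assms kj(1) unfolding evmono_def by blast
  then show "t \<le> u" using ki(1) by simp
qed


lemma nice_down:
  assumes "nice s" "s j = Some (w, u)" "i \<le> j"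
  shows "\<exists>v t. s i = Some (v, t) \<and> t \<le> u"
proof -
  have "s i \<noteq> None" using assms unfolding nice_def by blast
  then obtain v t where st: "s i = Some (v, t)" by fastforce
  then have "t \<le> u" using assms unfolding nice_def by blast
  then show ?thesis using st by blast
qed

definition Pset :: "('v, sdtime) str \<Rightarrow> sdtime \<Rightarrow> nat set" where
  "Pset s \<tau> = {i. s i \<noteq> None \<and> stamp s i \<le> \<tau>}"

lemma Pset_down:
  assumes "nice s" "j \<in> Pset s \<tau>" "i \<le> j" shows "i \<in> Pset s \<tau>"
proof -
  obtain w u where j: "s j = Some (w, u)" "u \<le> \<tau>" using assms(2) unfolding Pset_def stamp_def
    by (cases "s j") auto
  obtain v t where "s i = Some (v, t)" "t \<le> u" using nice_down[OF assms(1) j(1) assms(3)] by blast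
  then show ?thesis using j(2) unfolding Pset_def stamp_def by simp
qed

lemma Pset_agree_val: 
  assumes "agree_lt \<sigma> s s'" "\<tau> < \<sigma>" "i \<in> Pset s \<tau>" shows "s i = s' i"
proof -
  obtain v t where j: "s i = Some (v, t)" "t \<le> \<tau>" using assms(3) unfolding Pset_def stamp_def
    by (cases "s i") auto
  then have "t < \<sigma>" using assms(2) by simp
  then show ?thesis using j assms(1) by (metis agree_lt_def)
qed

lemma agree_lt_sym: "agree_lt \<sigma> s s' \<Longrightarrow> agree_lt \<sigma> s' s"
  unfolding agree_lt_def by blast

lemma Pset_agree_sub: "agree_lt \<sigma> s s' \<Longrightarrow> \<tau> < \<sigma> \<Longrightarrow> Pset s \<tau> \<subseteq> Pset s' \<tau>"
proof
  fix i assume a: "agree_lt \<sigma> s s'" "\<tau> < \<sigma>" "i \<in> Pset s \<tau>"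
  then have "s i = s' i" by (rule Pset_agree_val)
  then show "i \<in> Pset s' \<tau>" using a(3) unfolding Pset_def stamp_def by simp
qed

lemma Pset_agree: "agree_lt \<sigma> s s' \<Longrightarrow> \<tau> < \<sigma> \<Longrightarrow> Pset s \<tau> = Pset s' \<tau>"
  by (meson Pset_agree_sub agree_lt_sym subset_antisym)

lemma Pset_infinite: 
  assumes "nice s" "infinite (Pset s \<tau>)" shows "Pset s \<tau> = UNIV"
proof -
  have "\<And>i. i \<in> Pset s \<tau>"
  proof -
    fix i
    obtain j where "i \<le> j" "j \<in> Pset s \<tau>" using assms(2) unfolding infinite_nat_iff_unbounded_le by blast
    then show "i \<in> Pset s \<tau>" using Pset_down[OF assms(1)] by blast
  qed
  then show ?thesis by blast
qed

lemma Pset_finite_card: "nice s \<Longrightarrow> i < card (Pset s \<tau>) \<Longrightarrow> i \<in> Pset s \<tau>"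
proof (rule ccontr)
  assume n: "nice s" and i: "i < card (Pset s \<tau>)" and ni: "i \<notin> Pset s \<tau>"
  have "Pset s \<tau> \<subseteq> {..<i}"
  proof
    fix j assume "j \<in> Pset s \<tau>"
    then show "j \<in> {..<i}" using ni Pset_down[OF n, of j \<tau> i] by (cases "i \<le> j") auto
  qed
  then have "card (Pset s \<tau>) \<le> i" by (metis card_lessThan card_mono finite_lessThan)
  with i show False by simp
qed

lemma reg_val_cong:
  assumes "nice s" "agree_lt \<sigma> s s'" "\<tau> < \<sigma>"
  shows "reg_val s \<tau> = reg_val s' \<tau>"
proof -
  have P: "Pset s \<tau> = Pset s' \<tau>" by (rule Pset_agree[OF assms(2,3)])
  have pe: "\<And>i. (s i \<noteq> None \<and> stamp s i \<le> \<tau>) = (s' i \<noteq> None \<and> stamp s' i \<le> \<tau>)"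
    using P unfolding Pset_def by blast
  show ?thesis
  proof (cases "\<exists>i. s i \<noteq> None \<and> stamp s i \<le> \<tau>")
    case False
    then have F': "\<not> (\<exists>i. s' i \<noteq> None \<and> stamp s' i \<le> \<tau>)" using pe by blast
    show ?thesis unfolding reg_val_def by (simp only: False F' if_False)
  next
    case True
    define g0 where "g0 = (GREATEST i. s i \<noteq> None \<and> stamp s i \<le> \<tau>)"
    have "g0 \<in> Pset s \<tau>"
    proof (cases "finite (Pset s \<tau>)")
      case True
      then obtain b where "\<forall>x \<in> Pset s \<tau>. x \<le> b" using finite_nat_set_iff_bounded_le by blast
      then have b: "\<And>y. s y \<noteq> None \<and> stamp s y \<le> \<tau> \<Longrightarrow> y \<le> b" unfolding Pset_def by blast
      have "s g0 \<noteq> None \<and> stamp s g0 \<le> \<tau>" unfolding g0_def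
        by (rule GreatestI_ex_nat[OF \<open>\<exists>i. s i \<noteq> None \<and> stamp s i \<le> \<tau>\<close> b])
      then show ?thesis unfolding Pset_def by blast
    next
      case False then show ?thesis using Pset_infinite[OF assms(1)] by blast
    qed
    then have sg: "s g0 = s' g0" by (rule Pset_agree_val[OF assms(2,3)])
    have g1: "(GREATEST i. s' i \<noteq> None \<and> stamp s' i \<le> \<tau>) = g0"
      unfolding g0_def pe by (rule refl)
    have "reg_val s \<tau> = Some (val s g0)" using True unfolding reg_val_def g0_def by simp
    moreover have "reg_val s' \<tau> = Some (val s' g0)" using True g1 unfolding reg_val_def pe by simp
    ultimately show ?thesis using sg unfolding val_def by simp
  qed
qed

lemma cnt_eq: "cnt s \<tau> = card (Pset s \<tau>)"
  by (simp add: cnt_def Pset_def)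

lemma merge_event_cong:
  fixes H H' :: "('c, 'v) hist"
  assumes "\<forall>c \<in> set cs. nice (H c) \<and> agree_lt \<sigma> (H c) (H' c)"
    and "mono (rel N n)" and "(rel N n k, 1) \<le> \<sigma>"
  shows "merge_event N n cs H k = merge_event N n cs H' k"
proof -
  have lt: "(rel N n k, 0::nat) < \<sigma>" using assms(3) by (auto simp: less_eq_prod_def less_prod_def)
  have lt2: "(rel N n (k - 1), 0::nat) < \<sigma>"
  proof -
    have "rel N n (k - 1) \<le> rel N n k" using assms(2) by (simp add: monoD)
    then show ?thesis using lt by (auto simp: less_eq_prod_def less_prod_def)
  qed
  define F :: "('c, 'v) hist \<Rightarrow> 'c \<Rightarrow> 'v list" where "F = (\<lambda>H c. map (val (H c)) [(if k = 0 then 0 else cnt (H c) (rel N n (k - 1), 0))..<cnt (H c) (rel N n k, 0)])"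
  have "\<And>c. c \<in> set cs \<Longrightarrow> F H c = F H' c"
  proof -
    fix c assume c: "c \<in> set cs"
    then have n: "nice (H c)" and a: "agree_lt \<sigma> (H c) (H' c)" using assms(1) by auto
    have c1: "cnt (H c) (rel N n k, 0) = cnt (H' c) (rel N n k, 0)"
      unfolding cnt_eq using Pset_agree[OF a lt] by simp
    have c2: "cnt (H c) (rel N n (k-1), 0) = cnt (H' c) (rel N n (k-1), 0)"
      unfolding cnt_eq using Pset_agree[OF a lt2] by simp
    have "\<And>i. i < cnt (H c) (rel N n k, 0) \<Longrightarrow> val (H c) i = val (H' c) i"
    proof -
      fix i assume "i < cnt (H c) (rel N n k, 0)"
      then have "i \<in> Pset (H c) (rel N n k, 0)" unfolding cnt_eq by (rule Pset_finite_card[OF n])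
      then show "val (H c) i = val (H' c) i" unfolding val_def using Pset_agree_val[OF a lt] by simp
    qed
    then show "F H c = F H' c" unfolding F_def using c1 c2 by (intro map_cong) auto
  qed
  then have "map (F H) cs = map (F H') cs" by (rule map_cong[OF refl])
  then have eq: "concat (map (F H) cs) = concat (map (F H') cs)" by (rule arg_cong)
  show ?thesis unfolding merge_event_def by (simp only: eq[unfolded F_def])
qed

lemma merge_evmono:
  fixes H :: "('c, 'v) hist"
  assumes "mono (rel N n)" shows "evmono (merge_event N n cs H)"
proof -
  have "\<And>k k'. k' \<le> k \<Longrightarrow> (rel N n k', 1::nat) \<le> (rel N n k, 1)"
    using assms by (simp add: monoD)
  then show ?thesis unfolding evmono_def merge_event_def by blast
qed

lemma stamp0_nice:
  assumes "tstream s" shows "nice (stamp0 s)"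
proof -
  have pc: "\<And>i. s i = None \<Longrightarrow> s (Suc i) = None" using assms by (simp add: tstream_def)
  have A: "\<And>i j. i \<le> j \<Longrightarrow> s i = None \<Longrightarrow> s j = None"
  proof -
    fix i j :: nat assume "i \<le> j" "s i = None"
    then show "s j = None" by (induction j rule: dec_induct) (auto intro: pc)
  qed
  have B: "\<And>i j v w t u. i \<le> j \<Longrightarrow> s i = Some (v, t) \<Longrightarrow> s j = Some (w, u) \<Longrightarrow> t \<le> u"
    using assms by (simp add: tstream_def)
  show ?thesis unfolding nice_def
  proof (intro conjI allI impI)
    fix i j assume "i \<le> j" "stamp0 s j \<noteq> None"
    moreover have "\<And>i. stamp0 s i \<noteq> None \<longleftrightarrow> s i \<noteq> None" by (simp add: stamp0_def)
    ultimately show "stamp0 s i \<noteq> None" using A by blast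
  next
    fix i j v w t u assume a: "i \<le> j" "stamp0 s i = Some (v, t)" "stamp0 s j = Some (w, u)"
    obtain t1 where "s i = Some (v, t1)" "t = (t1, 0)" using a(2) unfolding stamp0_def by (cases "s i") auto
    moreover obtain u1 where "s j = Some (w, u1)" "u = (u1, 0)" using a(3) unfolding stamp0_def by (cases "s j") auto
    ultimately show "t \<le> u" using B[OF a(1)] by simp
  qed
qed


definition pJ :: "('n, 'c, 's, 'v) mimos \<Rightarrow> 'n \<Rightarrow> ('s \<Rightarrow> 'c \<Rightarrow> nat) \<Rightarrow> ('c, 'v) hist \<Rightarrow> 's \<Rightarrow> ('c \<Rightarrow> nat) \<Rightarrow> nat \<Rightarrow> nat" where
  "pJ N n dem H st cns nj = (LEAST j. nj \<le> j \<and> (\<forall>x \<in> p_stamps N n dem H st cns. fst x \<le> rel N n j))"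

definition pT :: "('n, 'c, 's, 'v) mimos \<Rightarrow> 'n \<Rightarrow> ('s \<Rightarrow> 'c \<Rightarrow> nat) \<Rightarrow> ('c, 'v) hist \<Rightarrow> 's \<Rightarrow> ('c \<Rightarrow> nat) \<Rightarrow> nat \<Rightarrow> sdtime \<Rightarrow> sdtime" where
  "pT N n dem H st cns nj lt = Max ({(rel N n (pJ N n dem H st cns nj), 0), lt} \<union> p_stamps N n dem H st cns)"

definition wfun :: "('n, 'c, 's, 'v) mimos \<Rightarrow> 'n \<Rightarrow> nat \<Rightarrow> sdtime \<Rightarrow> sdtime" where
  "wfun N n j \<tau> = (if 0 < dl N n then (rel N n j + dl N n, 0) else (fst \<tau>, Suc (snd \<tau>)))"

definition pFR :: "('n, 'c, 's, 'v) mimos \<Rightarrow> 'n \<Rightarrow> ('s \<Rightarrow> 'c \<Rightarrow> nat) \<Rightarrow> ('c, 'v) hist \<Rightarrow> 's \<Rightarrow> ('c \<Rightarrow> nat) \<Rightarrow> 'c \<Rightarrow> 'v list" where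
  "pFR N n dem H st cns = (\<lambda>c. if c \<in> infifos N n then map (val (H c)) [cns c..<cns c + dem st c] else [])"

definition pRR :: "('n, 'c, 's, 'v) mimos \<Rightarrow> 'n \<Rightarrow> ('c, 'v) hist \<Rightarrow> sdtime \<Rightarrow> 'c \<Rightarrow> 'v option" where
  "pRR N n H \<tau> = (\<lambda>c. if c \<in> inregs N n then reg_val (H c) \<tau> else None)"

lemma p_step_eq:
  "p_step N n dem stp H (st, cns, nj, lt) =
    (let j = pJ N n dem H st cns nj; \<tau> = pT N n dem H st cns nj lt;
         r = stp st (pFR N n dem H st cns) (pRR N n H \<tau>)
     in ((fst r, (\<lambda>c. cns c + (if c \<in> infifos N n then dem st c else 0)), Suc j, \<tau>),
         (wfun N n j \<tau>, fst (snd r), snd (snd r))))"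
  unfolding p_step_def pJ_def pT_def wfun_def pFR_def pRR_def Let_def
  by (simp split: prod.split)

definition readyc :: "('n, 'c, 's, 'v) mimos \<Rightarrow> 'n \<Rightarrow> ('s \<Rightarrow> 'c \<Rightarrow> nat) \<Rightarrow> ('c, 'v) hist \<Rightarrow> ('c, 's) conf \<Rightarrow> bool" where
  "readyc N n dem H cf = (case cf of (st, cns, _) \<Rightarrow> p_ready N n dem H st cns)"

lemma p_conf_Suc_eq:
  "p_conf N n i0 dem stp H (Suc k) =
    (case p_conf N n i0 dem stp H k of None \<Rightarrow> None
     | Some cf \<Rightarrow> if readyc N n dem H cf then Some (fst (p_step N n dem stp H cf)) else None)"
  by (simp add: readyc_def split: option.split prod.split)

lemma p_event_eq:
  "p_event N n i0 dem stp H k =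
    (case p_conf N n i0 dem stp H k of None \<Rightarrow> None
     | Some cf \<Rightarrow> if readyc N n dem H cf then Some (snd (p_step N n dem stp H cf)) else None)"
  by (simp add: readyc_def p_event_def split: option.split prod.split)

lemma p_event_SomeD:
  "p_event N n i0 dem stp H k = Some e \<Longrightarrow>
    \<exists>cf. p_conf N n i0 dem stp H k = Some cf \<and> readyc N n dem H cf \<and> e = snd (p_step N n dem stp H cf)"
  unfolding p_event_eq by (auto split: option.splits if_splits)

lemma p_conf_SucD:
  "p_conf N n i0 dem stp H (Suc k) = Some cf' \<Longrightarrow>
    \<exists>cf. p_conf N n i0 dem stp H k = Some cf \<and> readyc N n dem H cf \<and> cf' = fst (p_step N n dem stp H cf)"
  unfolding p_conf_Suc_eq by (auto split: option.splits if_splits)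

lemma p_stamps_finite:
  assumes "finite (chans N)"
  shows "finite (p_stamps N n dem H st cns)"
proof -
  have "p_stamps N n dem H st cns \<subseteq> (\<lambda>(c, i). stamp (H c) i) ` (SIGMA c:infifos N n. {cns c..<cns c + dem st c})"
  proof
    fix x assume "x \<in> p_stamps N n dem H st cns"
    then obtain c i where ci: "x = stamp (H c) i" "c \<in> infifos N n" "cns c \<le> i" "i < cns c + dem st c"
      unfolding p_stamps_def by blast
    show "x \<in> (\<lambda>(c, i). stamp (H c) i) ` (SIGMA c:infifos N n. {cns c..<cns c + dem st c})"
      by (rule rev_image_eqI[of "(c, i)"]) (use ci in auto)
  qed
  moreover have "finite (infifos N n)" using assms unfolding infifos_def by simp
  ultimately show ?thesis by (meson finite_SigmaI finite_atLeastLessThan finite_imageI finite_subset)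
qed

locale pnode =
  fixes N :: "('n, 'c, 's, 'v) mimos" and n :: 'n
  assumes mono_rel: "mono (rel N n)"
    and div_rel: "\<forall>B. \<exists>k. B < rel N n k"
    and dl_nn: "0 \<le> dl N n"
    and fin_chans: "finite (chans N)"
begin

lemma relD: "j \<le> j' \<Longrightarrow> rel N n j \<le> rel N n j'"
  using mono_rel by (simp add: monoD)

lemma pJ_props:
  "nj \<le> pJ N n dem H st cns nj \<and> (\<forall>x \<in> p_stamps N n dem H st cns. fst x \<le> rel N n (pJ N n dem H st cns nj))"
proof -
  define S where "S = p_stamps N n dem H st cns"
  have fS: "finite S" unfolding S_def by (rule p_stamps_finite[OF fin_chans])
  define M where "M = Max (insert 0 (fst ` S))"
  have M: "\<forall>x\<in>S. fst x \<le> M" unfolding M_def using fS by auto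
  obtain k where k: "M < rel N n k" using div_rel by blast
  have "nj \<le> max nj k \<and> (\<forall>x \<in> S. fst x \<le> rel N n (max nj k))"
    using M k relD[of k "max nj k"] by force
  then have "\<exists>j. nj \<le> j \<and> (\<forall>x \<in> S. fst x \<le> rel N n j)" by blast
  then show ?thesis unfolding pJ_def S_def[symmetric] by (rule LeastI_ex)
qed

lemma pT_props:
  assumes "fst lt \<le> rel N n nj"
  shows "fst (pT N n dem H st cns nj lt) = rel N n (pJ N n dem H st cns nj)
    \<and> lt \<le> pT N n dem H st cns nj lt
    \<and> (\<forall>x \<in> p_stamps N n dem H st cns. x \<le> pT N n dem H st cns nj lt)"
proof -
  define S where "S = p_stamps N n dem H st cns"
  define j where "j = pJ N n dem H st cns nj"
  define A where "A = {(rel N n j, 0), lt} \<union> S"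
  have fS: "finite S" unfolding S_def by (rule p_stamps_finite[OF fin_chans])
  have fA: "finite A" "A \<noteq> {}" unfolding A_def using fS by auto
  have jp: "nj \<le> j" "\<forall>x \<in> S. fst x \<le> rel N n j" using pJ_props unfolding j_def S_def by auto
  have T: "pT N n dem H st cns nj lt = Max A" unfolding pT_def A_def S_def j_def by simp
  have ge: "\<And>x. x \<in> A \<Longrightarrow> x \<le> Max A" using fA by simp
  have inA: "Max A \<in> A" using fA by simp
  have fa: "\<And>x. x \<in> A \<Longrightarrow> fst x \<le> rel N n j"
    unfolding A_def using jp assms relD[OF jp(1)] by auto
  have "(rel N n j, 0) \<le> Max A" using ge unfolding A_def by simp
  then have "rel N n j \<le> fst (Max A)" by (cases "Max A") (auto simp: less_eq_prod_def)
  moreover have "fst (Max A) \<le> rel N n j" using fa[OF inA] .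
  ultimately have "fst (Max A) = rel N n j" by simp
  moreover have "lt \<le> Max A" using ge unfolding A_def by simp
  moreover have "\<forall>x \<in> S. x \<le> Max A" using ge unfolding A_def by simp
  ultimately show ?thesis unfolding T S_def j_def by simp
qed

lemma wfun_gt: "fst \<tau> = rel N n j \<Longrightarrow> \<tau> < wfun N n j \<tau>"
  unfolding wfun_def by (cases \<tau>) (auto simp: less_prod_def')

lemma wfun_ge_rel: "fst \<tau> = rel N n j \<Longrightarrow> rel N n j \<le> fst (wfun N n j \<tau>)"
  unfolding wfun_def using dl_nn by auto

lemma wfun_mono:
  assumes "fst \<tau> = rel N n j" "fst \<tau>' = rel N n j'" "j \<le> j'" "\<tau> \<le> \<tau>'"
  shows "wfun N n j \<tau> \<le> wfun N n j' \<tau>'"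
proof (cases "0 < dl N n")
  case True then show ?thesis unfolding wfun_def using relD[OF assms(3)] by simp
next
  case False then show ?thesis unfolding wfun_def using assms(4) 
    by (cases \<tau>; cases \<tau>') (auto simp: less_eq_prod_def)
qed

definition inv :: "nat \<Rightarrow> ('c, 's) conf \<Rightarrow> bool" where
  "inv k cf = (case cf of (st, cns, nj, lt) \<Rightarrow> fst lt \<le> rel N n nj \<and> k \<le> nj)"

lemma p_conf_inv: "p_conf N n i0 dem stp H k = Some cf \<Longrightarrow> inv k cf"
proof (induction k arbitrary: cf)
  case 0 then show ?case by (auto simp: inv_def)
next
  case (Suc k)
  obtain cf0 where c0: "p_conf N n i0 dem stp H k = Some cf0" "cf = fst (p_step N n dem stp H cf0)"
    using p_conf_SucD[OF Suc.prems] by blast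
  obtain st cns nj lt where cf0: "cf0 = (st, cns, nj, lt)" by (cases cf0) auto
  have i: "fst lt \<le> rel N n nj" "k \<le> nj" using Suc.IH[OF c0(1)] cf0 by (auto simp: inv_def)
  have pj: "nj \<le> pJ N n dem H st cns nj" using pJ_props by blast
  have pt: "fst (pT N n dem H st cns nj lt) = rel N n (pJ N n dem H st cns nj)" using pT_props[OF i(1)] by blast
  show ?case using c0(2) cf0 i pj pt relD[of "pJ N n dem H st cns nj" "Suc (pJ N n dem H st cns nj)"]
    by (auto simp: p_step_eq Let_def inv_def)
qed

end


context pnode begin

lemma p_event_info:
  assumes "p_event N n i0 dem stp H k = Some e"
  shows "\<exists>st cns nj lt. p_conf N n i0 dem stp H k = Some (st, cns, nj, lt) \<and> readyc N n dem H (st, cns, nj, lt)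
     \<and> fst lt \<le> rel N n nj \<and> k \<le> nj
     \<and> fst e = wfun N n (pJ N n dem H st cns nj) (pT N n dem H st cns nj lt)
     \<and> fst (pT N n dem H st cns nj lt) = rel N n (pJ N n dem H st cns nj)
     \<and> nj \<le> pJ N n dem H st cns nj
     \<and> snd (p_step N n dem stp H (st, cns, nj, lt)) = e"
proof -
  obtain cf where cf: "p_conf N n i0 dem stp H k = Some cf" "readyc N n dem H cf" "e = snd (p_step N n dem stp H cf)"
    using p_event_SomeD[OF assms] by blast
  obtain st cns nj lt where c: "cf = (st, cns, nj, lt)" by (cases cf) auto
  have i: "fst lt \<le> rel N n nj" "k \<le> nj" using p_conf_inv[OF cf(1)] c by (auto simp: inv_def)
  have pt: "fst (pT N n dem H st cns nj lt) = rel N n (pJ N n dem H st cns nj)" using pT_props[OF i(1)] by blast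
  have pj: "nj \<le> pJ N n dem H st cns nj" using pJ_props by blast
  have "fst e = wfun N n (pJ N n dem H st cns nj) (pT N n dem H st cns nj lt)"
    using cf(3) c by (simp add: p_step_eq Let_def)
  then show ?thesis using cf c i pt pj by (intro exI[of _ st] exI[of _ cns] exI[of _ nj] exI[of _ lt]) simp
qed

lemma p_event_rel:
  assumes "p_event N n i0 dem stp H k = Some e"
  shows "rel N n k \<le> fst (fst e)"
proof -
  from p_event_info[OF assms] obtain st cns nj lt where
    a: "k \<le> nj" "fst e = wfun N n (pJ N n dem H st cns nj) (pT N n dem H st cns nj lt)"
       "fst (pT N n dem H st cns nj lt) = rel N n (pJ N n dem H st cns nj)" "nj \<le> pJ N n dem H st cns nj"
    by blast
  have "rel N n k \<le> rel N n (pJ N n dem H st cns nj)" using a relD by auto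
  also have "\<dots> \<le> fst (fst e)" using wfun_ge_rel[OF a(3)] a(2) by simp
  finally show ?thesis .
qed

lemma p_event_sig:
  assumes "p_event N n i0 dem stp H k = Some e"
  shows "fst (fst e) \<in> range (rel N n) \<union> range (\<lambda>j. rel N n j + dl N n)"
proof -
  from p_event_info[OF assms] obtain st cns nj lt where
    a: "fst e = wfun N n (pJ N n dem H st cns nj) (pT N n dem H st cns nj lt)"
       "fst (pT N n dem H st cns nj lt) = rel N n (pJ N n dem H st cns nj)"
    by blast
  then show ?thesis unfolding wfun_def by (auto split: if_splits)
qed

lemma p_event_step_mono:
  assumes "p_event N n i0 dem stp H (Suc k) = Some e"
  shows "\<exists>e'. p_event N n i0 dem stp H k = Some e' \<and> fst e' \<le> fst e"
proof -
  from p_event_info[OF assms] obtain st cns nj lt where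
    a: "p_conf N n i0 dem stp H (Suc k) = Some (st, cns, nj, lt)"
       "fst e = wfun N n (pJ N n dem H st cns nj) (pT N n dem H st cns nj lt)"
       "fst (pT N n dem H st cns nj lt) = rel N n (pJ N n dem H st cns nj)"
       "nj \<le> pJ N n dem H st cns nj" "fst lt \<le> rel N n nj"
    by blast
  obtain cf0 where c0: "p_conf N n i0 dem stp H k = Some cf0" "readyc N n dem H cf0"
      "(st, cns, nj, lt) = fst (p_step N n dem stp H cf0)"
    using p_conf_SucD[OF a(1)] by blast
  obtain st0 cns0 nj0 lt0 where cf0: "cf0 = (st0, cns0, nj0, lt0)" by (cases cf0) auto
  have i0: "fst lt0 \<le> rel N n nj0" using p_conf_inv[OF c0(1)] cf0 by (auto simp: inv_def)
  define j0 where "j0 = pJ N n dem H st0 cns0 nj0"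
  define t0 where "t0 = pT N n dem H st0 cns0 nj0 lt0"
  have nj: "nj = Suc j0" and lt: "lt = t0" using c0(3) cf0 by (simp_all add: p_step_eq Let_def j0_def t0_def)
  have pt0: "fst t0 = rel N n j0" using pT_props[OF i0] unfolding t0_def j0_def by blast
  define e' where "e' = snd (p_step N n dem stp H cf0)"
  have ev: "p_event N n i0 dem stp H k = Some e'" unfolding p_event_eq e'_def using c0 by simp
  have fe': "fst e' = wfun N n j0 t0" unfolding e'_def cf0 by (simp add: p_step_eq Let_def j0_def t0_def)
  have "lt \<le> pT N n dem H st cns nj lt" using pT_props[OF a(5)] by blast
  then have "wfun N n j0 t0 \<le> wfun N n (pJ N n dem H st cns nj) (pT N n dem H st cns nj lt)"
    using wfun_mono[OF pt0 a(3)] a(4) nj lt by simp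
  then show ?thesis using ev fe' a(2) by auto
qed

lemma p_event_mono:
  assumes "p_event N n i0 dem stp H k = Some e" "k' \<le> k"
  shows "\<exists>e'. p_event N n i0 dem stp H k' = Some e' \<and> fst e' \<le> fst e"
  using assms(2,1)
proof (induction k arbitrary: e rule: dec_induct)
  case base then show ?case by auto
next
  case (step m)
  obtain e1 where "p_event N n i0 dem stp H m = Some e1" "fst e1 \<le> fst e"
    using p_event_step_mono[OF step.prems] by blast
  with step.IH show ?case by (meson order_trans)
qed

end


lemma infifos_chans: "c \<in> infifos N n \<Longrightarrow> c \<in> chans N" by (simp add: infifos_def)
lemma inregs_chans: "c \<in> inregs N n \<Longrightarrow> c \<in> chans N" by (simp add: inregs_def)

lemma setcomp_eq:
  assumes "\<And>c i. P c i \<Longrightarrow> f c i = g c i"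
  shows "{f c i | c i. P c i} = {g c i | c i. P c i}"
proof (rule Collect_cong)
  fix x show "(\<exists>c i. x = f c i \<and> P c i) = (\<exists>c i. x = g c i \<and> P c i)"
  proof
    assume "\<exists>c i. x = f c i \<and> P c i"
    then obtain c i where "x = f c i" "P c i" by blast
    then show "\<exists>c i. x = g c i \<and> P c i" by (intro exI[of _ c] exI[of _ i]) (simp add: assms)
  next
    assume "\<exists>c i. x = g c i \<and> P c i"
    then obtain c i where "x = g c i" "P c i" by blast
    then show "\<exists>c i. x = f c i \<and> P c i" by (intro exI[of _ c] exI[of _ i]) (simp add: assms)
  qed
qed

context pnode begin

lemma fire_cong:
  fixes H H' :: "('c, 'v) hist"
  assumes ag: "\<forall>c\<in>chans N. nice (H c) \<and> agree_lt \<sigma> (H c) (H' c)"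
    and inv: "fst lt \<le> rel N n nj"
    and rd: "readyc N n dem H (st, cns, nj, lt)"
    and le: "fst (snd (p_step N n dem stp H (st, cns, nj, lt))) \<le> \<sigma>"
  shows "readyc N n dem H' (st, cns, nj, lt) \<and> p_step N n dem stp H' (st, cns, nj, lt) = p_step N n dem stp H (st, cns, nj, lt)"
proof -
  define j where "j = pJ N n dem H st cns nj"
  define \<tau> where "\<tau> = pT N n dem H st cns nj lt"
  have pt: "fst \<tau> = rel N n j" "\<forall>x \<in> p_stamps N n dem H st cns. x \<le> \<tau>"
    using pT_props[OF inv] unfolding \<tau>_def j_def by blast+
  have w: "fst (snd (p_step N n dem stp H (st, cns, nj, lt))) = wfun N n j \<tau>"
    by (simp add: p_step_eq Let_def j_def \<tau>_def)
  have tl: "\<tau> < \<sigma>" using wfun_gt[OF pt(1)] le w by simp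
  have tok: "\<And>c i. c \<in> infifos N n \<Longrightarrow> cns c \<le> i \<Longrightarrow> i < cns c + dem st c \<Longrightarrow> H' c i = H c i"
  proof -
    fix c i assume ci: "c \<in> infifos N n" "cns c \<le> i" "i < cns c + dem st c"
    have "H c i \<noteq> None" using rd ci unfolding readyc_def p_ready_def by auto
    then obtain v t where vt: "H c i = Some (v, t)" by fastforce
    have "stamp (H c) i \<in> p_stamps N n dem H st cns" unfolding p_stamps_def using ci by blast
    then have "t \<le> \<tau>" using pt(2) vt by (simp add: stamp_def)
    then have "t < \<sigma>" using tl by simp
    moreover have "agree_lt \<sigma> (H c) (H' c)" using ag infifos_chans[OF ci(1)] by blast
    ultimately have "H' c i = Some (v, t)" using vt unfolding agree_lt_def by blast
    then show "H' c i = H c i" using vt by simp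
  qed
  have rd': "readyc N n dem H' (st, cns, nj, lt)"
    using rd tok unfolding readyc_def p_ready_def by auto
  have S: "p_stamps N n dem H' st cns = p_stamps N n dem H st cns"
    unfolding p_stamps_def by (rule setcomp_eq) (simp add: tok stamp_def)
  have J: "pJ N n dem H' st cns nj = j" unfolding pJ_def j_def S ..
  have T: "pT N n dem H' st cns nj lt = \<tau>" unfolding pT_def \<tau>_def J[unfolded j_def] S ..
  have FR: "pFR N n dem H' st cns = pFR N n dem H st cns"
    unfolding pFR_def using tok by (auto intro!: map_cong simp: val_def)
  have RR: "pRR N n H' \<tau> = pRR N n H \<tau>"
  proof
    fix c show "pRR N n H' \<tau> c = pRR N n H \<tau> c"
    proof (cases "c \<in> inregs N n")
      case True
      have c: "c \<in> chans N" by (rule inregs_chans[OF True])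
      have "nice (H c)" using ag c by blast
      moreover have "agree_lt \<sigma> (H c) (H' c)" using ag c by blast
      ultimately have "reg_val (H c) \<tau> = reg_val (H' c) \<tau>" using tl by (rule reg_val_cong)
      then show ?thesis using True by (simp add: pRR_def)
    qed (simp add: pRR_def)
  qed
  have "p_step N n dem stp H' (st, cns, nj, lt) = p_step N n dem stp H (st, cns, nj, lt)"
    unfolding p_step_eq Let_def using J T FR RR by (simp add: j_def \<tau>_def)
  then show ?thesis using rd' by (intro conjI)
qed

lemma proc_cong:
  fixes H H' :: "('c, 'v) hist"
  assumes ag: "\<forall>c\<in>chans N. nice (H c) \<and> agree_lt \<sigma> (H c) (H' c)"
    and ev: "p_event N n i0 dem stp H k = Some e" and le: "fst e \<le> \<sigma>"
  shows "p_event N n i0 dem stp H' k = Some e"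
proof -
  have conf: "\<And>k'. k' \<le> k \<Longrightarrow> p_conf N n i0 dem stp H' k' = p_conf N n i0 dem stp H k'"
  proof -
    fix k' show "k' \<le> k \<Longrightarrow> p_conf N n i0 dem stp H' k' = p_conf N n i0 dem stp H k'"
    proof (induction k')
      case 0 then show ?case by simp
    next
      case (Suc m)
      obtain e1 where e1: "p_event N n i0 dem stp H m = Some e1" "fst e1 \<le> fst e"
        using p_event_mono[OF ev, of m] Suc.prems by auto
      from p_event_info[OF e1(1)] obtain st cns nj lt where
        a: "p_conf N n i0 dem stp H m = Some (st, cns, nj, lt)" "readyc N n dem H (st, cns, nj, lt)"
           "fst lt \<le> rel N n nj" "snd (p_step N n dem stp H (st, cns, nj, lt)) = e1"
        by blast
      have "fst (snd (p_step N n dem stp H (st, cns, nj, lt))) \<le> \<sigma>"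
        using a(4) e1(2) le by simp
      from fire_cong[OF ag a(3) a(2) this] have fc:
        "readyc N n dem H' (st, cns, nj, lt)" "p_step N n dem stp H' (st, cns, nj, lt) = p_step N n dem stp H (st, cns, nj, lt)"
        by blast+
      have IH: "p_conf N n i0 dem stp H' m = Some (st, cns, nj, lt)" using Suc a(1) by simp
      show ?case unfolding p_conf_Suc_eq IH a(1) using fc a(2) by simp
    qed
  qed
  from p_event_info[OF ev] obtain st cns nj lt where
    a: "p_conf N n i0 dem stp H k = Some (st, cns, nj, lt)" "readyc N n dem H (st, cns, nj, lt)"
       "fst lt \<le> rel N n nj" "snd (p_step N n dem stp H (st, cns, nj, lt)) = e"
    by blast
  have "fst (snd (p_step N n dem stp H (st, cns, nj, lt))) \<le> \<sigma>"
    using a(4) le by simp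
  from fire_cong[OF ag a(3) a(2) this] have fc:
    "readyc N n dem H' (st, cns, nj, lt)" "p_step N n dem stp H' (st, cns, nj, lt) = p_step N n dem stp H (st, cns, nj, lt)"
    by blast+
  have "p_conf N n i0 dem stp H' k = Some (st, cns, nj, lt)" using conf[of k] a(1) by simp
  then have "p_event N n i0 dem stp H' k = Some (snd (p_step N n dem stp H' (st, cns, nj, lt)))"
    unfolding p_event_eq using fc by simp
  then show ?thesis using fc(2) a(4) by simp
qed

end


definition FF :: "('n, 'c, 's, 'v) mimos \<Rightarrow> ('c \<Rightarrow> ('v, real) str) \<Rightarrow> ('c, 'v) hist \<Rightarrow> ('c, 'v) hist" where
  "FF N inp H c = (case writer N c of None \<Rightarrow> stamp0 (inp c) | Some n \<Rightarrow> node_out N n H c)"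

lemma is_run_FF: "is_run N inp H \<longleftrightarrow> (\<forall>c\<in>chans N. H c = FF N inp H c)"
  by (simp add: is_run_def FF_def)

definition pev :: "('n, 'c, 's, 'v) mimos \<Rightarrow> 'n \<Rightarrow> 's \<Rightarrow> ('s \<Rightarrow> 'c \<Rightarrow> nat)
      \<Rightarrow> ('s \<Rightarrow> ('c \<Rightarrow> 'v list) \<Rightarrow> ('c \<Rightarrow> 'v option) \<Rightarrow> 's \<times> ('c \<Rightarrow> 'v list) \<times> ('c \<Rightarrow> 'v option))
      \<Rightarrow> ('c, 'v) hist \<Rightarrow> 'c \<Rightarrow> nat \<Rightarrow> ('v list \<times> sdtime) option" where
  "pev N n i0 dem stp H c = (\<lambda>k. case p_event N n i0 dem stp H k of
                              None \<Rightarrow> None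
                            | Some (w, fo, ro) \<Rightarrow>
                                Some (if is_reg N c then (case ro c of None \<Rightarrow> [] | Some v \<Rightarrow> [v])
                                      else fo c, w))"

lemma node_out_Proc: "kind N n = Proc i0 dem stp \<Longrightarrow> node_out N n H c = concat_str (pev N n i0 dem stp H c)"
  by (simp add: node_out_def pev_def)

lemma node_out_Merge: "kind N n = Merge cs \<Longrightarrow> node_out N n H c = concat_str (merge_event N n cs H)"
  by (simp add: node_out_def)

lemma pev_Some: "pev N n i0 dem stp H c k = Some (l, w) \<Longrightarrow> \<exists>fo ro. p_event N n i0 dem stp H k = Some (w, fo, ro)"
  unfolding pev_def by (auto split: option.splits)

lemma pev_SomeI: "p_event N n i0 dem stp H k = Some (w, fo, ro) \<Longrightarrow> \<exists>l. pev N n i0 dem stp H c k = Some (l, w)"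
  unfolding pev_def by auto

context pnode begin

lemma pev_evmono: "evmono (pev N n i0 dem stp H c)"
  unfolding evmono_def
proof (intro allI impI)
  fix k k' l w assume a: "k' \<le> k" "pev N n i0 dem stp H c k = Some (l, w)"
  obtain fo ro where "p_event N n i0 dem stp H k = Some (w, fo, ro)" using pev_Some[OF a(2)] by blast
  from p_event_mono[OF this a(1)] obtain e' where e': "p_event N n i0 dem stp H k' = Some e'" "fst e' \<le> w" by auto
  obtain w' fo' ro' where "e' = (w', fo', ro')" by (cases e') auto
  then have pe: "p_event N n i0 dem stp H k' = Some (w', fo', ro')" and ww: "w' \<le> w" using e' by auto
  obtain l' where "pev N n i0 dem stp H c k' = Some (l', w')" using pev_SomeI[OF pe] by blast
  then show "\<exists>l' w'. pev N n i0 dem stp H c k' = Some (l', w') \<and> w' \<le> w"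
    using ww by blast
qed

lemma pev_cong:
  fixes H H' :: "('c, 'v) hist"
  assumes ag: "\<forall>c\<in>chans N. nice (H c) \<and> agree_lt \<sigma> (H c) (H' c)"
    and ev: "pev N n i0 dem stp H c k = Some (l, w)" and le: "w \<le> \<sigma>"
  shows "pev N n i0 dem stp H' c k = pev N n i0 dem stp H c k"
proof -
  obtain fo ro where e: "p_event N n i0 dem stp H k = Some (w, fo, ro)" using pev_Some[OF ev] by blast
  have "p_event N n i0 dem stp H' k = Some (w, fo, ro)"
    using proc_cong[OF ag e] le by simp
  then show ?thesis using e unfolding pev_def by simp
qed

lemma pev_stamp:
  "pev N n i0 dem stp H c k = Some (l, w) \<Longrightarrow> rel N n k \<le> fst w \<and> fst w \<in> range (rel N n) \<union> range (\<lambda>j. rel N n j + dl N n)"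
proof -
  assume "pev N n i0 dem stp H c k = Some (l, w)"
  then obtain fo ro where e: "p_event N n i0 dem stp H k = Some (w, fo, ro)" using pev_Some[of N n i0 dem stp H c k l w] by blast
  show ?thesis using p_event_rel[OF e] p_event_sig[OF e] by simp
qed

end

lemma wf_pnode: "wf_mimos N \<Longrightarrow> n \<in> nodes N \<Longrightarrow> pnode N n"
  unfolding wf_mimos_def pnode_def by blast

lemma wf_merge: "wf_mimos N \<Longrightarrow> n \<in> nodes N \<Longrightarrow> kind N n = Merge cs \<Longrightarrow> set cs \<subseteq> chans N"
  unfolding wf_mimos_def by blast

lemma wf_writer: "wf_mimos N \<Longrightarrow> c \<in> chans N \<Longrightarrow> writer N c = Some n \<Longrightarrow> n \<in> nodes N"
  unfolding wf_mimos_def by blast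

lemma node_evmono:
  assumes "wf_mimos N" "n \<in> nodes N"
  shows "nice (node_out N n H c)"
proof (cases "kind N n")
  case (Proc i0 dem stp)
  interpret pnode N n by (rule wf_pnode[OF assms])
  show ?thesis unfolding node_out_Proc[OF Proc] by (rule concat_nice[OF pev_evmono])
next
  case (Merge cs)
  interpret pnode N n by (rule wf_pnode[OF assms])
  show ?thesis unfolding node_out_Merge[OF Merge] by (rule concat_nice[OF merge_evmono[OF mono_rel]])
qed

lemma node_cong:
  fixes H H' :: "('c, 'v) hist"
  assumes wf: "wf_mimos N" "n \<in> nodes N"
    and ag: "\<forall>c\<in>chans N. nice (H c) \<and> nice (H' c) \<and> agree_lt \<sigma> (H c) (H' c)"
  shows "agree_le \<sigma> (node_out N n H c) (node_out N n H' c)"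
proof -
  interpret pnode N n by (rule wf_pnode[OF wf])
  have ag1: "\<forall>c\<in>chans N. nice (H c) \<and> agree_lt \<sigma> (H c) (H' c)" using ag by blast
  have ag2: "\<forall>c\<in>chans N. nice (H' c) \<and> agree_lt \<sigma> (H' c) (H c)" using ag agree_lt_sym by blast
  show ?thesis
  proof (cases "kind N n")
    case (Proc i0 dem stp)
    show ?thesis unfolding node_out_Proc[OF Proc]
    proof (rule concat_agree_le[OF pev_evmono pev_evmono])
      fix k l w assume "pev N n i0 dem stp H c k = Some (l, w)" "w \<le> \<sigma>"
      then show "pev N n i0 dem stp H' c k = pev N n i0 dem stp H c k" by (rule pev_cong[OF ag1])
    next
      fix k l w assume "pev N n i0 dem stp H' c k = Some (l, w)" "w \<le> \<sigma>"
      then show "pev N n i0 dem stp H c k = pev N n i0 dem stp H' c k" by (rule pev_cong[OF ag2])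
    qed
  next
    case (Merge cs)
    have sc: "set cs \<subseteq> chans N" by (rule wf_merge[OF wf Merge])
    have a1: "\<forall>c \<in> set cs. nice (H c) \<and> agree_lt \<sigma> (H c) (H' c)" using ag1 sc by blast
    have a2: "\<forall>c \<in> set cs. nice (H' c) \<and> agree_lt \<sigma> (H' c) (H c)" using ag2 sc by blast
    show ?thesis unfolding node_out_Merge[OF Merge]
    proof (rule concat_agree_le[OF merge_evmono[OF mono_rel] merge_evmono[OF mono_rel]])
      fix k l w assume "merge_event N n cs H k = Some (l, w)" "w \<le> \<sigma>"
      then have "(rel N n k, 1) \<le> \<sigma>" by (simp add: merge_event_def)
      then show "merge_event N n cs H' k = merge_event N n cs H k"
        using merge_event_cong[OF a1 mono_rel] by simp
    next
      fix k l w assume "merge_event N n cs H' k = Some (l, w)" "w \<le> \<sigma>"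
      then have "(rel N n k, 1) \<le> \<sigma>" by (simp add: merge_event_def)
      then show "merge_event N n cs H k = merge_event N n cs H' k"
        using merge_event_cong[OF a2 mono_rel] by simp
    qed
  qed
qed

definition Rset :: "('n, 'c, 's, 'v) mimos \<Rightarrow> ('c \<Rightarrow> ('v, real) str) \<Rightarrow> real set" where
  "Rset N inp = (\<Union>n\<in>nodes N. range (rel N n) \<union> range (\<lambda>j. rel N n j + dl N n))
                \<union> (\<Union>c\<in>in_chans N. {t. \<exists>i v. inp c i = Some (v, t)})"

definition inSig :: "('n, 'c, 's, 'v) mimos \<Rightarrow> ('c \<Rightarrow> ('v, real) str) \<Rightarrow> ('v, sdtime) str \<Rightarrow> bool" where
  "inSig N inp s \<longleftrightarrow> (\<forall>i v t. s i = Some (v, t) \<longrightarrow> fst t \<in> Rset N inp)"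

lemma Rset_node: "n \<in> nodes N \<Longrightarrow> x \<in> range (rel N n) \<union> range (\<lambda>j. rel N n j + dl N n) \<Longrightarrow> x \<in> Rset N inp"
  unfolding Rset_def by blast

lemma Rset_inp: "c \<in> in_chans N \<Longrightarrow> inp c i = Some (v, t) \<Longrightarrow> t \<in> Rset N inp"
  unfolding Rset_def by blast

lemma FF_props:
  assumes wf: "wf_mimos N" and ins: "\<forall>c \<in> in_chans N. tstream (inp c)" and c: "c \<in> chans N"
  shows "nice (FF N inp H c) \<and> inSig N inp (FF N inp H c)"
proof (cases "writer N c")
  case None
  then have ci: "c \<in> in_chans N" using c by (simp add: in_chans_def)
  have "nice (stamp0 (inp c))" using ins ci stamp0_nice by blast
  moreover have "inSig N inp (stamp0 (inp c))"
    unfolding inSig_def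
  proof (intro allI impI)
    fix i v t assume a: "stamp0 (inp c) i = Some (v, t)"
    obtain t1 where "inp c i = Some (v, t1)" "t = (t1, 0)"
    proof (cases "inp c i")
      case None then show ?thesis using a by (simp add: stamp0_def)
    next
      case (Some p) then show ?thesis using a that by (cases p) (simp add: stamp0_def)
    qed
    then show "fst t \<in> Rset N inp" using Rset_inp[OF ci] by simp
  qed
  ultimately show ?thesis using None by (simp add: FF_def)
next
  case (Some n)
  have n: "n \<in> nodes N" by (rule wf_writer[OF wf c Some])
  interpret pnode N n by (rule wf_pnode[OF wf n])
  have "inSig N inp (node_out N n H c)"
  proof (cases "kind N n")
    case (Proc i0 dem stp)
    show ?thesis unfolding inSig_def node_out_Proc[OF Proc]
    proof (intro allI impI)
      fix i v t assume h: "concat_str (pev N n i0 dem stp H c) i = Some (v, t)"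
      obtain k l where "pev N n i0 dem stp H c k = Some (l, t)" using concat_str_SomeD[OF h] by blast
      then have "fst t \<in> range (rel N n) \<union> range (\<lambda>j. rel N n j + dl N n)" using pev_stamp by blast
      then show "fst t \<in> Rset N inp" by (rule Rset_node[OF n])
    qed
  next
    case (Merge cs)
    show ?thesis unfolding inSig_def node_out_Merge[OF Merge]
    proof (intro allI impI)
      fix i v t assume h: "concat_str (merge_event N n cs H) i = Some (v, t)"
      obtain k l where "merge_event N n cs H k = Some (l, t)" using concat_str_SomeD[OF h] by blast
      then have "t = (rel N n k, 1)" unfolding merge_event_def by simp
      then have "fst t \<in> range (rel N n) \<union> range (\<lambda>j. rel N n j + dl N n)" by simp
      then show "fst t \<in> Rset N inp" by (rule Rset_node[OF n])
    qed
  qed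
  then show ?thesis using node_evmono[OF wf n] Some by (simp add: FF_def)
qed

lemma FF_cong:
  fixes H H' :: "('c, 'v) hist"
  assumes wf: "wf_mimos N" and c: "c \<in> chans N"
    and ag: "\<forall>c\<in>chans N. nice (H c) \<and> nice (H' c) \<and> agree_lt \<sigma> (H c) (H' c)"
  shows "agree_le \<sigma> (FF N inp H c) (FF N inp H' c)"
proof (cases "writer N c")
  case None then show ?thesis by (simp add: FF_def agree_le_def)
next
  case (Some n)
  then show ?thesis using node_cong[OF wf wf_writer[OF wf c Some] ag] by (simp add: FF_def)
qed


lemma agree_le_mono: "agree_le \<sigma> s s' \<Longrightarrow> \<rho> \<le> \<sigma> \<Longrightarrow> agree_le \<rho> s s'"
  unfolding agree_le_def by (meson order_trans)

lemma agree_le_trans: "agree_le \<sigma> s s' \<Longrightarrow> agree_le \<sigma> s' s'' \<Longrightarrow> agree_le \<sigma> s s''"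
  unfolding agree_le_def by blast

lemma agree_le_sym: "agree_le \<sigma> s s' \<Longrightarrow> agree_le \<sigma> s' s"
  unfolding agree_le_def by blast

lemma agree_le_lt: "agree_le \<sigma> s s' \<Longrightarrow> agree_lt \<sigma> s s'"
  unfolding agree_le_def agree_lt_def by (meson less_imp_le)

lemma agree_lt_from:
  assumes "\<And>i v t. s i = Some (v, t) \<Longrightarrow> P t" "\<And>i v t. s' i = Some (v, t) \<Longrightarrow> P t"
    and "\<And>\<rho>. P \<rho> \<Longrightarrow> \<rho> < \<sigma> \<Longrightarrow> agree_le \<rho> s s'"
  shows "agree_lt \<sigma> s s'"
  unfolding agree_lt_def
proof (intro allI impI iffI)
  fix i v t assume t: "t < \<sigma>"
  { assume h: "s i = Some (v, t)"
    have "agree_le t s s'" using assms(3)[OF assms(1)[OF h] t] .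
    then show "s' i = Some (v, t)" using h unfolding agree_le_def by blast }
  { assume h: "s' i = Some (v, t)"
    have "agree_le t s s'" using assms(3)[OF assms(2)[OF h] t] .
    then show "s i = Some (v, t)" using h unfolding agree_le_def by blast }
qed

lemma eq_from_agree:
  assumes "\<And>i v t. s i = Some (v, t) \<Longrightarrow> P t" "\<And>i v t. s' i = Some (v, t) \<Longrightarrow> P t"
    and "\<And>\<rho>. P \<rho> \<Longrightarrow> agree_le \<rho> s s'"
  shows "s = s'"
proof
  fix i show "s i = s' i"
  proof (cases "s i")
    case None
    show ?thesis
    proof (cases "s' i")
      case None then show ?thesis using \<open>s i = None\<close> by simp
    next
      case (Some p)
      obtain v t where p: "s' i = Some (v, t)" using Some by (cases p) auto
      have "agree_le t s s'" using assms(3)[OF assms(2)[OF p]] .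
      then have "s i = Some (v, t)" using p unfolding agree_le_def by blast
      then show ?thesis using None by simp
    qed
  next
    case (Some p)
    obtain v t where p: "s i = Some (v, t)" using Some by (cases p) auto
    have "agree_le t s s'" using assms(3)[OF assms(1)[OF p]] .
    then have "s' i = Some (v, t)" using p unfolding agree_le_def by blast
    then show ?thesis using p by simp
  qed
qed

lemma finite_rel_below:
  assumes "mono f" "\<forall>B. \<exists>k. B < (f::nat \<Rightarrow> real) k"
  shows "finite {x \<in> range f. x \<le> T}"
proof -
  obtain k where k: "T < f k" using assms(2) by blast
  have "{x \<in> range f. x \<le> T} \<subseteq> f ` {..<k}"
  proof
    fix x assume "x \<in> {x \<in> range f. x \<le> T}"
    then obtain j where j: "x = f j" "f j \<le> T" by blast
    have "j < k"
    proof (rule ccontr)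
      assume "\<not> j < k" then have "f k \<le> f j" using assms(1) by (simp add: monoD)
      then show False using j k by simp
    qed
    then show "x \<in> f ` {..<k}" using j by blast
  qed
  then show ?thesis by (rule finite_subset) simp
qed

lemma finite_input_below:
  assumes "tstream s"
  shows "finite {t. \<exists>i v. s i = Some (v, t) \<and> t \<le> T}"
proof -
  have pc: "\<And>i j. i \<le> j \<Longrightarrow> s i = None \<Longrightarrow> s j = None"
  proof -
    fix i j :: nat assume "i \<le> j" "s i = None"
    then show "s j = None" by (induction j rule: dec_induct) (use assms in \<open>auto simp: tstream_def\<close>)
  qed
  have mo: "\<And>i j v w t u. i \<le> j \<Longrightarrow> s i = Some (v, t) \<Longrightarrow> s j = Some (w, u) \<Longrightarrow> t \<le> u"
    using assms by (simp add: tstream_def)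
  define g where "g = (\<lambda>i. snd (the (s i)))"
  obtain K where K: "\<And>i v t. s i = Some (v, t) \<Longrightarrow> t \<le> T \<Longrightarrow> i < K"
  proof (cases "\<forall>i. s i \<noteq> None")
    case True
    then obtain i1 v1 t1 where i1: "s i1 = Some (v1, t1)" "T < t1" using assms unfolding tstream_def by blast
    show ?thesis
    proof (rule that[of i1])
      fix i v t assume "s i = Some (v, t)" "t \<le> T"
      then show "i < i1" using mo[of i1 i v1 t1 v t] i1 by (cases "i1 \<le> i") auto
    qed
  next
    case False
    then obtain i0 where i0: "s i0 = None" by blast
    show ?thesis
    proof (rule that[of i0])
      fix i v t assume "s i = Some (v, t)" "t \<le> T"
      then show "i < i0" using pc[of i0 i] i0 by (cases "i0 \<le> i") auto
    qed
  qed
  have "{t. \<exists>i v. s i = Some (v, t) \<and> t \<le> T} \<subseteq> g ` {..<K}"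
  proof
    fix t assume "t \<in> {t. \<exists>i v. s i = Some (v, t) \<and> t \<le> T}"
    then obtain i v where iv: "s i = Some (v, t)" "t \<le> T" by blast
    then have "i < K" using K by blast
    moreover have "t = g i" using iv by (simp add: g_def)
    ultimately show "t \<in> g ` {..<K}" by blast
  qed
  then show ?thesis by (rule finite_subset) simp
qed

lemma Rset_finite_below:
  assumes wf: "wf_mimos N" and ins: "\<forall>c \<in> in_chans N. tstream (inp c)"
  shows "finite {x \<in> Rset N inp. x \<le> T}"
proof -
  have fn: "finite (nodes N)" and fc: "finite (chans N)" using wf by (auto simp: wf_mimos_def)
  have a: "\<And>n. n \<in> nodes N \<Longrightarrow> finite {x \<in> range (rel N n) \<union> range (\<lambda>j. rel N n j + dl N n). x \<le> T}"
  proof -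
    fix n assume n: "n \<in> nodes N"
    interpret pnode N n by (rule wf_pnode[OF wf n])
    have m2: "mono (\<lambda>j. rel N n j + dl N n)" using mono_rel by (simp add: mono_def)
    have d2: "\<forall>B. \<exists>k. B < rel N n k + dl N n"
    proof
      fix B obtain k where "B - dl N n < rel N n k" using div_rel by blast
      then show "\<exists>k. B < rel N n k + dl N n" by (intro exI[of _ k]) simp
    qed
    have "{x \<in> range (rel N n) \<union> range (\<lambda>j. rel N n j + dl N n). x \<le> T}
        = {x \<in> range (rel N n). x \<le> T} \<union> {x \<in> range (\<lambda>j. rel N n j + dl N n). x \<le> T}" by blast
    then show "?thesis n" using finite_rel_below[OF mono_rel div_rel] finite_rel_below[OF m2 d2] by simp
  qed
  have b: "\<And>c. c \<in> in_chans N \<Longrightarrow> finite {x \<in> {t. \<exists>i v. inp c i = Some (v, t)}. x \<le> T}"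
  proof -
    fix c assume "c \<in> in_chans N"
    then have "finite {t. \<exists>i v. inp c i = Some (v, t) \<and> t \<le> T}" using finite_input_below ins by blast
    moreover have "{x \<in> {t. \<exists>i v. inp c i = Some (v, t)}. x \<le> T} = {t. \<exists>i v. inp c i = Some (v, t) \<and> t \<le> T}" by blast
    ultimately show "?thesis c" by simp
  qed
  have fi: "finite (in_chans N)" using fc by (simp add: in_chans_def)
  have "{x \<in> Rset N inp. x \<le> T} =
     (\<Union>n\<in>nodes N. {x \<in> range (rel N n) \<union> range (\<lambda>j. rel N n j + dl N n). x \<le> T})
     \<union> (\<Union>c\<in>in_chans N. {x \<in> {t. \<exists>i v. inp c i = Some (v, t)}. x \<le> T})"
    unfolding Rset_def by blast
  then show ?thesis using a b fn fi by simp
qed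

definition Rrel :: "('n, 'c, 's, 'v) mimos \<Rightarrow> ('c \<Rightarrow> ('v, real) str) \<Rightarrow> (sdtime \<times> sdtime) set" where
  "Rrel N inp = {(a, b). fst a \<in> Rset N inp \<and> a < b}"

lemma wf_Rrel:
  assumes wf: "wf_mimos N" and ins: "\<forall>c \<in> in_chans N. tstream (inp c)"
  shows "wf (Rrel N inp)"
proof -
  define Rr where "Rr = {(a, b). a \<in> Rset N inp \<and> (a::real) < b}"
  have "wf Rr"
  proof (rule wf_finite_segments)
    show "irrefl Rr" unfolding Rr_def irrefl_def by simp
    show "trans Rr" unfolding Rr_def trans_def by auto
    fix x
    have "{y. (y, x) \<in> Rr} \<subseteq> {y \<in> Rset N inp. y \<le> x}" unfolding Rr_def by auto
    then show "finite {y. (y, x) \<in> Rr}" using Rset_finite_below[OF wf ins] by (rule finite_subset)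
  qed
  then have w: "wf (Rr <*lex*> less_than)" by (rule wf_lex_prod) simp
  have "Rrel N inp \<subseteq> Rr <*lex*> less_than"
  proof
    fix p assume "p \<in> Rrel N inp"
    then obtain a b where p: "p = (a, b)" "fst a \<in> Rset N inp" "a < b" unfolding Rrel_def by blast
    obtain a1 a2 b1 b2 where ab: "a = (a1, a2)" "b = (b1, b2)" by (cases a, cases b) auto
    show "p \<in> Rr <*lex*> less_than" using p ab unfolding Rr_def by (auto simp: less_prod_def')
  qed
  then show ?thesis by (rule wf_subset[OF w])
qed


definition Qrun :: "('n, 'c, 's, 'v) mimos \<Rightarrow> ('c \<Rightarrow> ('v, real) str) \<Rightarrow> sdtime \<Rightarrow> ('c, 'v) hist \<Rightarrow> bool" where
  "Qrun N inp \<sigma> H \<longleftrightarrow> (\<forall>c\<in>chans N. nice (H c) \<and> inSig N inp (H c) \<and> agree_le \<sigma> (H c) (FF N inp H c))"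

lemma Qrun_mono: "Qrun N inp \<sigma> H \<Longrightarrow> \<rho> \<le> \<sigma> \<Longrightarrow> Qrun N inp \<rho> H"
  unfolding Qrun_def using agree_le_mono by blast

lemma agree_leD: "agree_le \<sigma> s s' \<Longrightarrow> t \<le> \<sigma> \<Longrightarrow> s i = Some (v, t) \<Longrightarrow> s' i = Some (v, t)"
  unfolding agree_le_def by blast

lemma agree_leD2: "agree_le \<sigma> s s' \<Longrightarrow> t \<le> \<sigma> \<Longrightarrow> s' i = Some (v, t) \<Longrightarrow> s i = Some (v, t)"
  unfolding agree_le_def by blast

lemma inSigD: "inSig N inp s \<Longrightarrow> s i = Some (v, t) \<Longrightarrow> fst t \<in> Rset N inp"
  unfolding inSig_def by blast

lemma part_unique:
  fixes H H' :: "('c, 'v) hist" and N :: "('n, 'c, 's, 'v) mimos"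
  assumes wf: "wf_mimos N" and ins: "\<forall>c \<in> in_chans N. tstream (inp c)"
    and Q: "Qrun N inp \<sigma> H" and Q': "Qrun N inp \<sigma> H'"
  shows "\<forall>c\<in>chans N. agree_le \<sigma> (H c) (H' c)"
proof -
  have "\<rho> \<le> \<sigma> \<longrightarrow> (\<forall>c\<in>chans N. agree_le \<rho> (H c) (H' c))" for \<rho>
    using wf_Rrel[OF wf ins]
  proof (induction \<rho> rule: wf_induct_rule)
    case (less \<rho>)
    show ?case
    proof (intro impI ballI)
      assume rs: "\<rho> \<le> \<sigma>"
      fix c assume c: "c \<in> chans N"
      have alt: "\<forall>c\<in>chans N. nice (H c) \<and> nice (H' c) \<and> agree_lt \<rho> (H c) (H' c)"
      proof
        fix c assume c: "c \<in> chans N"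
        have n: "nice (H c)" "nice (H' c)" "inSig N inp (H c)" "inSig N inp (H' c)"
          using Q Q' c unfolding Qrun_def by blast+
        have "agree_lt \<rho> (H c) (H' c)"
        proof (rule agree_lt_from[where P="\<lambda>t. fst t \<in> Rset N inp"])
          fix i v t assume "H c i = Some (v, t)" then show "fst t \<in> Rset N inp" by (rule inSigD[OF n(3)])
        next
          fix i v t assume "H' c i = Some (v, t)" then show "fst t \<in> Rset N inp" by (rule inSigD[OF n(4)])
        next
          fix t assume tr: "fst t \<in> Rset N inp" "t < \<rho>"
          have rr: "(t, \<rho>) \<in> Rrel N inp" using tr by (simp add: Rrel_def)
          have "t < \<sigma>" using tr(2) rs by (rule less_le_trans)
          then have ts: "t \<le> \<sigma>" by (rule less_imp_le)
          have "t \<le> \<sigma> \<longrightarrow> (\<forall>c\<in>chans N. agree_le t (H c) (H' c))" by (rule less[OF rr])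
          then show "agree_le t (H c) (H' c)" using ts c by blast
        qed
        then show "nice (H c) \<and> nice (H' c) \<and> agree_lt \<rho> (H c) (H' c)" using n by blast
      qed
      have "agree_le \<rho> (FF N inp H c) (FF N inp H' c)" by (rule FF_cong[OF wf c alt])
      moreover have "agree_le \<rho> (H c) (FF N inp H c)" using Q c rs agree_le_mono unfolding Qrun_def by blast
      moreover have "agree_le \<rho> (H' c) (FF N inp H' c)" using Q' c rs agree_le_mono unfolding Qrun_def by blast
      ultimately show "agree_le \<rho> (H c) (H' c)"
        using agree_le_trans[OF agree_le_trans agree_le_sym] by blast
    qed
  qed
  then show ?thesis by blast
qed

definition glue :: "(sdtime \<Rightarrow> ('c, 'v) hist) \<Rightarrow> sdtime set \<Rightarrow> ('c, 'v) hist" where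
  "glue G A c i = (if \<exists>\<rho>\<in>A. \<exists>v t. G \<rho> c i = Some (v, t) \<and> t \<le> \<rho>
      then G (SOME \<rho>. \<rho> \<in> A \<and> (\<exists>v t. G \<rho> c i = Some (v, t) \<and> t \<le> \<rho>)) c i else None)"

lemma glue_Some:
  assumes "glue G A c i = Some (v, t)"
  shows "\<exists>\<rho>\<in>A. G \<rho> c i = Some (v, t) \<and> t \<le> \<rho>"
proof -
  have exb: "\<exists>\<rho>\<in>A. \<exists>v t. G \<rho> c i = Some (v, t) \<and> t \<le> \<rho>"
  proof (rule ccontr)
    assume n: "\<not> (\<exists>\<rho>\<in>A. \<exists>v t. G \<rho> c i = Some (v, t) \<and> t \<le> \<rho>)"
    have "glue G A c i = None" unfolding glue_def by (simp only: n if_False)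
    then show False using assms by simp
  qed
  then have ex: "\<exists>\<rho>. \<rho> \<in> A \<and> (\<exists>v t. G \<rho> c i = Some (v, t) \<and> t \<le> \<rho>)" by blast
  define \<rho> where "\<rho> = (SOME \<rho>. \<rho> \<in> A \<and> (\<exists>v t. G \<rho> c i = Some (v, t) \<and> t \<le> \<rho>))"
  have r: "\<rho> \<in> A \<and> (\<exists>v t. G \<rho> c i = Some (v, t) \<and> t \<le> \<rho>)" unfolding \<rho>_def by (rule someI_ex[OF ex])
  have "glue G A c i = G \<rho> c i" unfolding glue_def \<rho>_def by (simp only: exb if_True)
  then have "G \<rho> c i = Some (v, t)" using assms by simp
  moreover obtain v1 t1 where "G \<rho> c i = Some (v1, t1)" "t1 \<le> \<rho>" using r by blast
  ultimately show ?thesis using r by auto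
qed

lemma glue_agree:
  fixes N :: "('n, 'c, 's, 'v) mimos" and G :: "sdtime \<Rightarrow> ('c, 'v) hist"
  assumes wf: "wf_mimos N" and ins: "\<forall>c \<in> in_chans N. tstream (inp c)"
    and QG: "\<forall>\<rho>\<in>A. Qrun N inp \<rho> (G \<rho>)" and r: "\<rho> \<in> A" and c: "c \<in> chans N"
  shows "agree_le \<rho> (glue G A c) (G \<rho> c)"
proof -
  have cons: "\<And>\<rho>1 \<rho>2. \<rho>1 \<in> A \<Longrightarrow> \<rho>2 \<in> A \<Longrightarrow> agree_le (min \<rho>1 \<rho>2) (G \<rho>1 c) (G \<rho>2 c)"
  proof -
    fix \<rho>1 \<rho>2 assume "\<rho>1 \<in> A" "\<rho>2 \<in> A"
    then have q1: "Qrun N inp \<rho>1 (G \<rho>1)" and q2: "Qrun N inp \<rho>2 (G \<rho>2)" using QG by blast+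
    have "Qrun N inp (min \<rho>1 \<rho>2) (G \<rho>1)" using Qrun_mono[OF q1 min.cobounded1] .
    moreover have "Qrun N inp (min \<rho>1 \<rho>2) (G \<rho>2)" using Qrun_mono[OF q2 min.cobounded2] .
    ultimately have "\<forall>c\<in>chans N. agree_le (min \<rho>1 \<rho>2) (G \<rho>1 c) (G \<rho>2 c)" by (rule part_unique[OF wf ins])
    then show "agree_le (min \<rho>1 \<rho>2) (G \<rho>1 c) (G \<rho>2 c)" using c by blast
  qed
  show ?thesis unfolding agree_le_def
  proof (intro allI impI iffI)
    fix i v t assume t: "t \<le> \<rho>"
    { assume h: "glue G A c i = Some (v, t)"
      then obtain \<rho>' where r': "\<rho>' \<in> A" "G \<rho>' c i = Some (v, t)" "t \<le> \<rho>'" using glue_Some[OF h] by blast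
      have "t \<le> min \<rho> \<rho>'" using t r'(3) by (rule min.boundedI)
      then show "G \<rho> c i = Some (v, t)" using agree_leD2[OF cons[OF r r'(1)] _ r'(2)] by blast }
    { assume h: "G \<rho> c i = Some (v, t)"
      then have exb: "\<exists>\<rho>'\<in>A. \<exists>v t. G \<rho>' c i = Some (v, t) \<and> t \<le> \<rho>'" using r t by blast
      then have ex: "\<exists>\<rho>'. \<rho>' \<in> A \<and> (\<exists>v t. G \<rho>' c i = Some (v, t) \<and> t \<le> \<rho>')" by blast
      define \<rho>' where "\<rho>' = (SOME \<rho>. \<rho> \<in> A \<and> (\<exists>v t. G \<rho> c i = Some (v, t) \<and> t \<le> \<rho>))"
      have r': "\<rho>' \<in> A \<and> (\<exists>v t. G \<rho>' c i = Some (v, t) \<and> t \<le> \<rho>')" unfolding \<rho>'_def by (rule someI_ex[OF ex])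
      then obtain v' t' where vt': "G \<rho>' c i = Some (v', t')" "t' \<le> \<rho>'" by blast
      have g: "glue G A c i = G \<rho>' c i" unfolding glue_def \<rho>'_def by (simp only: exb if_True)
      have ag: "agree_le (min \<rho> \<rho>') (G \<rho> c) (G \<rho>' c)" using cons[OF r] r' by simp
      have "G \<rho>' c i = Some (v, t)"
      proof (cases "t \<le> min \<rho> \<rho>'")
        case True show ?thesis by (rule agree_leD[OF ag True h])
      next
        case False
        then have "\<not> t \<le> \<rho>'" using t by (simp add: min.boundedI)
        then have "\<rho>' < \<rho>" using t by (meson le_less_trans not_le)
        then have "min \<rho> \<rho>' = \<rho>'" by simp
        then have "t' \<le> min \<rho> \<rho>'" using vt'(2) by simp
        then have "G \<rho> c i = Some (v', t')" using agree_leD2[OF ag _ vt'(1)] by blast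
        then show ?thesis using h vt'(1) by simp
      qed
      then show "glue G A c i = Some (v, t)" using g by simp }
  qed
qed


lemma glue_props:
  fixes N :: "('n, 'c, 's, 'v) mimos" and G :: "sdtime \<Rightarrow> ('c, 'v) hist"
  assumes wf: "wf_mimos N" and ins: "\<forall>c \<in> in_chans N. tstream (inp c)"
    and QG: "\<forall>\<rho>\<in>A. Qrun N inp \<rho> (G \<rho>)" and c: "c \<in> chans N"
  shows "nice (glue G A c) \<and> inSig N inp (glue G A c)"
proof -
  have gs: "\<And>j w u. glue G A c j = Some (w, u) \<Longrightarrow> \<exists>\<rho>\<in>A. G \<rho> c j = Some (w, u) \<and> u \<le> \<rho>"
    by (rule glue_Some)
  have sig: "inSig N inp (glue G A c)"
    unfolding inSig_def
  proof (intro allI impI)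
    fix i v t assume "glue G A c i = Some (v, t)"
    then obtain \<rho> where r: "\<rho> \<in> A" "G \<rho> c i = Some (v, t)" using gs by blast
    have "inSig N inp (G \<rho> c)" using QG r(1) c unfolding Qrun_def by blast
    then show "fst t \<in> Rset N inp" using r(2) by (rule inSigD)
  qed
  have key: "\<And>i j w u. i \<le> j \<Longrightarrow> glue G A c j = Some (w, u) \<Longrightarrow> \<exists>v t. glue G A c i = Some (v, t) \<and> t \<le> u"
  proof -
    fix i j w u assume ij: "i \<le> j" and h: "glue G A c j = Some (w, u)"
    obtain \<rho> where r: "\<rho> \<in> A" "G \<rho> c j = Some (w, u)" "u \<le> \<rho>" using gs[OF h] by blast
    have nG: "nice (G \<rho> c)" using QG r(1) c unfolding Qrun_def by blast
    obtain v t where vt: "G \<rho> c i = Some (v, t)" "t \<le> u" using nice_down[OF nG r(2) ij] by blast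
    have ag: "agree_le \<rho> (glue G A c) (G \<rho> c)" by (rule glue_agree[OF wf ins QG r(1) c])
    have "t \<le> \<rho>" using vt(2) r(3) by (rule order_trans)
    then have "glue G A c i = Some (v, t)" using agree_leD2[OF ag _ vt(1)] by blast
    then show "\<exists>v t. glue G A c i = Some (v, t) \<and> t \<le> u" using vt(2) by blast
  qed
  have "nice (glue G A c)" unfolding nice_def
  proof (intro conjI allI impI)
    fix i j assume "i \<le> j" "glue G A c j \<noteq> None"
    then obtain w u where "glue G A c j = Some (w, u)" by (cases "glue G A c j") auto
    then show "glue G A c i \<noteq> None" using key \<open>i \<le> j\<close> by blast
  next
    fix i j v w t u assume a: "i \<le> j" "glue G A c i = Some (v, t)" "glue G A c j = Some (w, u)"
    obtain v' t' where "glue G A c i = Some (v', t')" "t' \<le> u" using key[OF a(1) a(3)] by blast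
    then show "t \<le> u" using a(2) by simp
  qed
  then show ?thesis using sig by blast
qed

lemma glue_FF:
  fixes N :: "('n, 'c, 's, 'v) mimos" and G :: "sdtime \<Rightarrow> ('c, 'v) hist"
  assumes wf: "wf_mimos N" and ins: "\<forall>c \<in> in_chans N. tstream (inp c)"
    and QG: "\<forall>\<rho>\<in>A. Qrun N inp \<rho> (G \<rho>)" and r: "\<rho> \<in> A" and c: "c \<in> chans N"
  shows "agree_le \<rho> (glue G A c) (FF N inp (glue G A) c)"
proof -
  have q: "Qrun N inp \<rho> (G \<rho>)" using QG r by blast
  have a1: "agree_le \<rho> (glue G A c) (G \<rho> c)" by (rule glue_agree[OF wf ins QG r c])
  have a2: "agree_le \<rho> (G \<rho> c) (FF N inp (G \<rho>) c)" using q c unfolding Qrun_def by blast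
  have all: "\<forall>c\<in>chans N. nice (G \<rho> c) \<and> nice (glue G A c) \<and> agree_lt \<rho> (G \<rho> c) (glue G A c)"
  proof
    fix c assume c: "c \<in> chans N"
    have "nice (G \<rho> c)" using q c unfolding Qrun_def by blast
    moreover have "nice (glue G A c)" using glue_props[OF wf ins QG c] by blast
    moreover have "agree_lt \<rho> (G \<rho> c) (glue G A c)"
      by (rule agree_le_lt[OF agree_le_sym[OF glue_agree[OF wf ins QG r c]]])
    ultimately show "nice (G \<rho> c) \<and> nice (glue G A c) \<and> agree_lt \<rho> (G \<rho> c) (glue G A c)" by blast
  qed
  have a3: "agree_le \<rho> (FF N inp (G \<rho>) c) (FF N inp (glue G A) c)" by (rule FF_cong[OF wf c all])
  show ?thesis by (rule agree_le_trans[OF agree_le_trans[OF a1 a2] a3])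
qed

lemma FF_props':
  assumes wf: "wf_mimos N" and ins: "\<forall>c \<in> in_chans N. tstream (inp c)" and c: "c \<in> chans N"
  shows "nice (FF N inp H c)" "inSig N inp (FF N inp H c)"
  using FF_props[OF wf ins c] by blast+

lemma step_Q:
  fixes N :: "('n, 'c, 's, 'v) mimos" and G :: "sdtime \<Rightarrow> ('c, 'v) hist"
  assumes wf: "wf_mimos N" and ins: "\<forall>c \<in> in_chans N. tstream (inp c)"
    and QG: "\<forall>\<rho>\<in>{\<rho>. (\<rho>, \<sigma>) \<in> Rrel N inp}. Qrun N inp \<rho> (G \<rho>)"
  shows "Qrun N inp \<sigma> (FF N inp (glue G {\<rho>. (\<rho>, \<sigma>) \<in> Rrel N inp}))"
proof -
  define A where "A = {\<rho>. (\<rho>, \<sigma>) \<in> Rrel N inp}"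
  define H where "H = glue G A"
  have QG': "\<forall>\<rho>\<in>A. Qrun N inp \<rho> (G \<rho>)" using QG unfolding A_def .
  have lt: "\<forall>c\<in>chans N. nice (H c) \<and> nice (FF N inp H c) \<and> agree_lt \<sigma> (H c) (FF N inp H c)"
  proof
    fix c assume c: "c \<in> chans N"
    have gp: "nice (H c)" "inSig N inp (H c)" using glue_props[OF wf ins QG' c] unfolding H_def by blast+
    have "agree_lt \<sigma> (H c) (FF N inp H c)"
    proof (rule agree_lt_from[where P="\<lambda>t. fst t \<in> Rset N inp"])
      fix i v t assume "H c i = Some (v, t)" then show "fst t \<in> Rset N inp" by (rule inSigD[OF gp(2)])
    next
      fix i v t assume "FF N inp H c i = Some (v, t)" then show "fst t \<in> Rset N inp"
        by (rule inSigD[OF FF_props'(2)[OF wf ins c]])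
    next
      fix t :: sdtime assume "fst t \<in> Rset N inp" "t < \<sigma>"
      then have "t \<in> A" unfolding A_def Rrel_def by simp
      then show "agree_le t (H c) (FF N inp H c)" unfolding H_def by (rule glue_FF[OF wf ins QG' _ c])
    qed
    then show "nice (H c) \<and> nice (FF N inp H c) \<and> agree_lt \<sigma> (H c) (FF N inp H c)"
      using gp FF_props'(1)[OF wf ins c] by blast
  qed
  have "Qrun N inp \<sigma> (FF N inp H)" unfolding Qrun_def
  proof
    fix c assume c: "c \<in> chans N"
    have "agree_le \<sigma> (FF N inp H c) (FF N inp (FF N inp H) c)" by (rule FF_cong[OF wf c lt])
    then show "nice (FF N inp H c) \<and> inSig N inp (FF N inp H c) \<and> agree_le \<sigma> (FF N inp H c) (FF N inp (FF N inp H) c)"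
      using FF_props'[OF wf ins c] by blast
  qed
  then show ?thesis unfolding H_def A_def .
qed

lemma exists_Q:
  fixes N :: "('n, 'c, 's, 'v) mimos"
  assumes wf: "wf_mimos N" and ins: "\<forall>c \<in> in_chans N. tstream (inp c)"
  shows "\<exists>H :: ('c, 'v) hist. Qrun N inp \<sigma> H"
  using wf_Rrel[OF wf ins]
proof (induction \<sigma> rule: wf_induct_rule)
  case (less \<sigma>)
  define G :: "sdtime \<Rightarrow> ('c, 'v) hist" where "G = (\<lambda>\<rho>. SOME H. Qrun N inp \<rho> H)"
  have "\<forall>\<rho>\<in>{\<rho>. (\<rho>, \<sigma>) \<in> Rrel N inp}. Qrun N inp \<rho> (G \<rho>)"
  proof
    fix \<rho> assume "\<rho> \<in> {\<rho>. (\<rho>, \<sigma>) \<in> Rrel N inp}"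
    then have "(\<rho>, \<sigma>) \<in> Rrel N inp" by simp
    then have "\<exists>H :: ('c, 'v) hist. Qrun N inp \<rho> H" by (rule less)
    then show "Qrun N inp \<rho> (G \<rho>)" unfolding G_def by (rule someI_ex)
  qed
  then have "Qrun N inp \<sigma> (FF N inp (glue G {\<rho>. (\<rho>, \<sigma>) \<in> Rrel N inp}))" by (rule step_Q[OF wf ins])
  then show ?case by blast
qed

theorem run_exists:
  fixes N :: "('n, 'c, 's, 'v) mimos"
  assumes wf: "wf_mimos N" and ins: "\<forall>c \<in> in_chans N. tstream (inp c)"
  shows "\<exists>H. is_run N inp H"
proof -
  define G :: "sdtime \<Rightarrow> ('c, 'v) hist" where "G = (\<lambda>\<rho>. SOME H. Qrun N inp \<rho> H)"
  define A :: "sdtime set" where "A = {\<rho>. fst \<rho> \<in> Rset N inp}"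
  have QG: "\<forall>\<rho>\<in>A. Qrun N inp \<rho> (G \<rho>)"
  proof
    fix \<rho> show "Qrun N inp \<rho> (G \<rho>)" unfolding G_def by (rule someI_ex[OF exists_Q[OF wf ins]])
  qed
  define H where "H = glue G A"
  have "\<forall>c\<in>chans N. H c = FF N inp H c"
  proof
    fix c assume c: "c \<in> chans N"
    have gp: "inSig N inp (H c)" using glue_props[OF wf ins QG c] unfolding H_def by blast
    show "H c = FF N inp H c"
    proof (rule eq_from_agree[where P="\<lambda>t. fst t \<in> Rset N inp"])
      fix i v t assume "H c i = Some (v, t)" then show "fst t \<in> Rset N inp" by (rule inSigD[OF gp])
    next
      fix i v t assume "FF N inp H c i = Some (v, t)" then show "fst t \<in> Rset N inp"
        by (rule inSigD[OF FF_props'(2)[OF wf ins c]])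
    next
      fix t :: sdtime assume "fst t \<in> Rset N inp"
      then have "t \<in> A" unfolding A_def by simp
      then show "agree_le t (H c) (FF N inp H c)" unfolding H_def by (rule glue_FF[OF wf ins QG _ c])
    qed
  qed
  then show ?thesis unfolding is_run_FF by blast
qed

lemma run_Q:
  assumes wf: "wf_mimos N" and ins: "\<forall>c \<in> in_chans N. tstream (inp c)" and r: "is_run N inp H"
  shows "Qrun N inp \<sigma> H"
  unfolding Qrun_def
proof
  fix c assume c: "c \<in> chans N"
  have e: "H c = FF N inp H c" using r c unfolding is_run_FF by blast
  have "agree_le \<sigma> (H c) (FF N inp H c)" unfolding e by (simp add: agree_le_def)
  then show "nice (H c) \<and> inSig N inp (H c) \<and> agree_le \<sigma> (H c) (FF N inp H c)"
    using FF_props'[OF wf ins c] e by simp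
qed

theorem run_unique:
  assumes wf: "wf_mimos N" and ins: "\<forall>c \<in> in_chans N. tstream (inp c)"
    and r: "is_run N inp H" and r': "is_run N inp H'" and c: "c \<in> chans N"
  shows "H c = H' c"
proof (rule eq_from_agree[where P="\<lambda>_. True"])
  fix \<rho>
  have "\<forall>c\<in>chans N. agree_le \<rho> (H c) (H' c)"
    by (rule part_unique[OF wf ins run_Q[OF wf ins r] run_Q[OF wf ins r']])
  then show "agree_le \<rho> (H c) (H' c)" using c by blast
qed simp_all


lemma strip_None: "strip s i = None \<longleftrightarrow> s i = None"
  by (simp add: strip_def)

lemma strip_SomeD: "strip s i = Some (v, t) \<Longrightarrow> \<exists>m. s i = Some (v, (t, m))"
  unfolding strip_def by (cases "s i") auto

lemma strip_SomeI: "s i = Some (v, (t, m)) \<Longrightarrow> strip s i = Some (v, t)"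
  unfolding strip_def by simp

lemma tstream_strip:
  assumes n: "nice s"
    and d: "(\<forall>i. s i \<noteq> None) \<Longrightarrow> \<forall>B. \<exists>i v t. s i = Some (v, t) \<and> B < fst t"
  shows "tstream (strip s)"
  unfolding tstream_def
proof (intro conjI allI impI)
  fix i assume "strip s i = None"
  then have "s i = None" by (simp add: strip_None)
  then have "s (Suc i) = None" using n unfolding nice_def by (meson le_SucI order_refl)
  then show "strip s (Suc i) = None" by (simp add: strip_None)
next
  fix i j v w t u assume a: "i \<le> j" "strip s i = Some (v, t)" "strip s j = Some (w, u)"
  obtain m where m: "s i = Some (v, (t, m))" using strip_SomeD[OF a(2)] by blast
  obtain m' where m': "s j = Some (w, (u, m'))" using strip_SomeD[OF a(3)] by blast
  have "(t, m) \<le> (u, m')" using n a(1) m m' unfolding nice_def by blast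
  then show "t \<le> u" by (auto simp: less_eq_prod_def)
next
  fix B assume "\<forall>i. strip s i \<noteq> None"
  then have "\<forall>i. s i \<noteq> None" by (simp add: strip_None)
  then obtain i v t where it: "s i = Some (v, t)" "B < fst t" using d by blast
  have "strip s i = Some (v, fst t)" using it(1) by (intro strip_SomeI[where m="snd t"]) simp
  then show "\<exists>i t v. strip s i = Some (v, t) \<and> B < t" using it(2) by blast
qed

lemma concat_div:
  assumes em: "evmono ev" and mf: "mono (f :: nat \<Rightarrow> real)" and df: "\<forall>B. \<exists>k. B < f k"
    and lb: "\<And>k l w. ev k = Some (l, w) \<Longrightarrow> f k \<le> fst w"
    and all: "\<forall>i. concat_str ev i \<noteq> None"
  shows "\<forall>B. \<exists>i v t. concat_str ev i = Some (v, t) \<and> B < fst t"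
proof
  fix B
  obtain K where K: "B < f K" using df by blast
  define i where "i = cum ev (Suc K)"
  have "concat_str ev i \<noteq> None" using all by blast
  then obtain p where "concat_str ev i = Some p" by blast
  then obtain v t where vt: "concat_str ev i = Some (v, t)" by (cases p) simp
  obtain k l where k: "ev k = Some (l, t)" "i < cum ev (Suc k)" using concat_str_SomeD[OF vt] by blast
  have "K < k"
  proof (rule ccontr)
    assume "\<not> K < k" then have "Suc k \<le> Suc K" by simp
    then have "cum ev (Suc k) \<le> i" unfolding i_def by (rule cum_mono)
    then show False using k(2) by simp
  qed
  then have "f K \<le> f k" using mf by (simp add: monoD)
  then have "B < fst t" using K lb[OF k(1)] by simp
  then show "\<exists>i v t. concat_str ev i = Some (v, t) \<and> B < fst t" using vt by blast
qed

lemma strip_stamp0: "strip (stamp0 s) = s"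
proof
  fix i show "strip (stamp0 s) i = s i"
    by (cases "s i") (auto simp: strip_def stamp0_def split_beta)
qed

lemma output_tstream:
  assumes wf: "wf_mimos N" and ins: "\<forall>c \<in> in_chans N. tstream (inp c)"
    and r: "is_run N inp H" and c: "c \<in> chans N"
  shows "tstream (strip (H c))"
proof -
  have e: "H c = FF N inp H c" using r c unfolding is_run_FF by blast
  have nH: "nice (H c)" using FF_props'(1)[OF wf ins c] e by simp
  show ?thesis
  proof (cases "writer N c")
    case None
    then have ci: "c \<in> in_chans N" using c by (simp add: in_chans_def)
    have hc: "H c = stamp0 (inp c)" using e None by (simp add: FF_def)
    have "tstream (inp c)" using ins ci by blast
    then show ?thesis unfolding hc strip_stamp0 .
  next
    case (Some n)
    have n: "n \<in> nodes N" by (rule wf_writer[OF wf c Some])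
    interpret pnode N n by (rule wf_pnode[OF wf n])
    have hn: "H c = node_out N n H c" using e Some by (simp add: FF_def)
    show ?thesis
    proof (rule tstream_strip[OF nH])
      assume all: "\<forall>i. H c i \<noteq> None"
      show "\<forall>B. \<exists>i v t. H c i = Some (v, t) \<and> B < fst t"
      proof (cases "kind N n")
        case (Proc i0 dem stp)
        have hc: "H c = concat_str (pev N n i0 dem stp H c)" using hn node_out_Proc[OF Proc] by simp
        have "\<forall>B. \<exists>i v t. concat_str (pev N n i0 dem stp H c) i = Some (v, t) \<and> B < fst t"
        proof (rule concat_div[OF pev_evmono mono_rel div_rel])
          fix k l w assume "pev N n i0 dem stp H c k = Some (l, w)"
          then show "rel N n k \<le> fst w" using pev_stamp by blast
        next
          show "\<forall>i. concat_str (pev N n i0 dem stp H c) i \<noteq> None" using all hc by simp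
        qed
        then show ?thesis using hc by simp
      next
        case (Merge cs)
        have hc: "H c = concat_str (merge_event N n cs H)" using hn node_out_Merge[OF Merge] by simp
        have "\<forall>B. \<exists>i v t. concat_str (merge_event N n cs H) i = Some (v, t) \<and> B < fst t"
        proof (rule concat_div[OF merge_evmono[OF mono_rel] mono_rel div_rel])
          fix k l w assume "merge_event N n cs H k = Some (l, w)"
          then have "w = (rel N n k, 1)" by (simp add: merge_event_def)
          then show "rel N n k \<le> fst w" by simp
        next
          show "\<forall>i. concat_str (merge_event N n cs H) i \<noteq> None" using all hc by simp
        qed
        then show ?thesis using hc by simp
      qed
    qed
  qed
qed

theorem theorem2:
  fixes N :: "('n, 'c, 's, 'v) mimos" and inp :: "'c \<Rightarrow> ('v, real) str"
  assumes "wf_mimos N"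
    and "\<forall>c \<in> in_chans N. tstream (inp c)"
  shows "(\<exists>H. is_run N inp H) \<and>
         (\<forall>H H'. is_run N inp H \<longrightarrow> is_run N inp H' \<longrightarrow>
                 (\<forall>c \<in> out_chans N. strip (H c) = strip (H' c))) \<and>
         (\<forall>H. is_run N inp H \<longrightarrow> (\<forall>c \<in> out_chans N. tstream (strip (H c))))"
proof (intro conjI allI impI ballI)
  show "\<exists>H. is_run N inp H" by (rule run_exists[OF assms])
next
  fix H H' c assume r: "is_run N inp H" "is_run N inp H'" and c: "c \<in> out_chans N"
  have "c \<in> chans N" using c by (simp add: out_chans_def)
  then have "H c = H' c" by (rule run_unique[OF assms r])
  then show "strip (H c) = strip (H' c)" by simp
next
  fix H c assume r: "is_run N inp H" and c: "c \<in> out_chans N"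
  have "c \<in> chans N" using c by (simp add: out_chans_def)
  then show "tstream (strip (H c))" by (rule output_tstream[OF assms r])
qed


end
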